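(* Let $n\ge 1$, let $u=(u_1,\dots,u_n)$ be a 021-avoiding ascent sequence and let $P=\Phi(u)$ be the Dyck path of size $n$ defined in the context. Then: (1) the number of initial 0s of $u$ equals the length of the first descent of $P$; (2) the number of terminal 0s of $u$ equals the length of the last ascent of $P$ minus 1, where for the all-zero sequence the number of terminal 0s is interpreted as $n-1$; (3) the number of ascents of $u$ equals the number of valleys (occurrences of $DU$) of $P$; (4) the number of descents of $u$ equals the number of occurrences of three consecutive steps $DUU$ in $P$; (5) if $u$ has a nonzero entry, the number of entries immediately preceding the last nonzero entry of $u$ and equal to it (i.e., the length of the maximal run of consecutive entries equal to the last nonzero entry that ends just before it) equals the degree of elevation of $P$.
   Context: An ascent in a sequence of integers is a pair of consecutive entries with the first smaller than the second; a descent is a pair of consecutive entries with the first larger than the second. An ascent sequence of length $n$ is a sequence $(u_1,\dots,u_n)$ of nonnegative integers with $u_1=0$ and $u_i\le 1+(\text{number of ascents in }(u_1,\dots,u_{i-1}))$ for $2\le i\le n$. It is 021-avoiding if its nonzero entries are weakly increasing. The number of initial 0s is the length of the maximal initial run of zeros; the number of terminal 0s is the length of the maximal final run of zeros. A Dyck path of size $n$ is a sequence of $n$ upsteps $U=(1,1)$ and $n$ downsteps $D=(1,-1)$ starting at height 0 and never going below height 0. An ascent (resp. descent) of a path is a maximal run of consecutive $U$'s (resp. $D$'s); the first descent is the leftmost one, the last ascent the rightmost one, and the terminal descent the final descent. A peak vertex is the vertex between a $U$ and the immediately following $D$; a valley vertex is the vertex between a $D$ and the immediately following $U$. The degree of elevation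 of a path having at least one valley is the minimum height of its valley vertices. For an upstep $U_0$, its matching downstep is the last step of the shortest Dyck subpath beginning with $U_0$; $U_0$ is its matching upstep. A key downstep is a downstep on the terminal descent whose matching upstep is the middle letter of an occurrence of $DUU$. Key downsteps are ordered from left to right. The map $\Phi$: given $(u_1,\dots,u_n)$, start with $P=UD$. For $i=2,\dots,n$, with $a$ and $m$ the number of ascents and the maximum entry of $(u_1,\dots,u_{i-1})$: Case 1: if $u_i=0$, replace the last $UD$ of $P$ by $UUDD$. Case 2: if $u_i\neq0$ and $u_i=u_{i-1}$, replace $P$ by $UPD$. Case 3: if $u_i\neq 0$, $u_i\ne u_{i-1}$ and $u_i=a+1$, replace $P$ by $PUD$. Case 4: otherwise, $u_i$ lies in $A_i=(m,\dots,a)$ if $u_{i-1}=0$, or $A_i=(m+1,\dots,a)$ if $u_{i-1}>0$; let $j$ be the position of $u_i$ in $A_i$, $e$ the degree of elevation of $P$, and $D_j$ the $j$-th key downstep of $P$. Insert $UD$ at the top vertex of $D_j$, then delete $e$ upsteps from the start of the path and insert $e$ upsteps into the ascent containing the matching upstep of $D_j$. $\Phi(u)$ is the final path. *)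

theory Defs
  imports Main
begin

section \<open>Sequences of integers (nat lists, 0-indexed)\<close>

definition asc_count :: "nat list \<Rightarrow> nat" where
  "asc_count xs = card {i. Suc i < length xs \<and> xs ! i < xs ! Suc i}"

definition desc_count :: "nat list \<Rightarrow> nat" where
  "desc_count xs = card {i. Suc i < length xs \<and> xs ! i > xs ! Suc i}"

definition ascent_seq :: "nat list \<Rightarrow> bool" where
  "ascent_seq u \<longleftrightarrow> u \<noteq> [] \<and> u ! 0 = 0 \<and>
     (\<forall>i. 1 \<le> i \<and> i < length u \<longrightarrow> u ! i \<le> 1 + asc_count (take i u))"

definition avoids_021 :: "nat list \<Rightarrow> bool" where
  "avoids_021 u \<longleftrightarrow> sorted (filter (\<lambda>x. x \<noteq> 0) u)"

definition initial_zeros :: "nat list \<Rightarrow> nat" where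
  "initial_zeros u = length (takeWhile (\<lambda>x. x = 0) u)"

definition terminal_zeros :: "nat list \<Rightarrow> nat" where
  "terminal_zeros u = length (takeWhile (\<lambda>x. x = 0) (rev u))"

definition last_nonzero_idx :: "nat list \<Rightarrow> nat" where
  "last_nonzero_idx u = (GREATEST i. i < length u \<and> u ! i \<noteq> 0)"

definition run_before_last_nonzero :: "nat list \<Rightarrow> nat" where
  "run_before_last_nonzero u =
     (let j = last_nonzero_idx u in length (takeWhile (\<lambda>x. x = u ! j) (rev (take j u))))"

type_synonym path = "bool list"

abbreviation U :: bool where "U \<equiv> True"
abbreviation D :: bool where "D \<equiv> False"

definition dyck_path :: "path \<Rightarrow> bool" where
  "dyck_path P \<longleftrightarrow> count_list P U = count_list P D \<and>
     (\<forall>k \<le> length P. count_list (take k P) D \<le> count_list (take k P) U)"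

text \<open>Height of vertex v (the vertex after the first v steps).\<close>
definition height :: "path \<Rightarrow> nat \<Rightarrow> int" where
  "height P v = int (count_list (take v P) U) - int (count_list (take v P) D)"

definition first_descent_len :: "path \<Rightarrow> nat" where
  "first_descent_len P = length (takeWhile (\<lambda>s. s = D) (dropWhile (\<lambda>s. s = U) P))"

definition last_ascent_len :: "path \<Rightarrow> nat" where
  "last_ascent_len P = length (takeWhile (\<lambda>s. s = U) (dropWhile (\<lambda>s. s = D) (rev P)))"

definition terminal_descent_len :: "path \<Rightarrow> nat" where
  "terminal_descent_len P = length (takeWhile (\<lambda>s. s = D) (rev P))"

definition valley_count :: "path \<Rightarrow> nat" where
  "valley_count P = card {i. Suc i < length P \<and> P ! i = D \<and> P ! Suc i = U}"

definition DUU_count :: "path \<Rightarrow> nat" where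
  "DUU_count P = card {i. i + 2 < length P \<and> P ! i = D \<and> P ! (i+1) = U \<and> P ! (i+2) = U}"

definition valley_vertex :: "path \<Rightarrow> nat \<Rightarrow> bool" where
  "valley_vertex P v \<longleftrightarrow> 0 < v \<and> v < length P \<and> P ! (v - 1) = D \<and> P ! v = U"

text \<open>Degree of elevation: minimum height of valley vertices (meaningful when a valley exists).\<close>
definition elevation :: "path \<Rightarrow> int" where
  "elevation P = Min (height P ` {v. valley_vertex P v})"

text \<open>Matching downstep of the upstep at index k: last step of the shortest
  Dyck subpath starting with step k, i.e. first return to the level of vertex k.\<close>
definition match_down :: "path \<Rightarrow> nat \<Rightarrow> nat" where
  "match_down P k = (LEAST l. k < l \<and> l < length P \<and> height P (Suc l) = height P k)"

definition match_up :: "path \<Rightarrow> nat \<Rightarrow> nat" where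
  "match_up P l = (THE k. k < length P \<and> P ! k = U \<and> match_down P k = l)"

definition key_down :: "path \<Rightarrow> nat \<Rightarrow> bool" where
  "key_down P l \<longleftrightarrow> l < length P \<and> length P - terminal_descent_len P \<le> l \<and>
     (\<exists>k. 0 < k \<and> Suc k < length P \<and> P ! k = U \<and> match_down P k = l \<and>
          P ! (k - 1) = D \<and> P ! Suc k = U)"

definition key_downs :: "path \<Rightarrow> nat list" where
  "key_downs P = filter (key_down P) [0..<length P]"

definition last_UD :: "path \<Rightarrow> nat" where
  "last_UD P = (GREATEST k. Suc k < length P \<and> P ! k = U \<and> P ! Suc k = D)"

text \<open>Step for the (0-indexed) entry i >= 1 of u (i.e. the paper's u_{i+1}).\<close>
definition phi_step :: "nat list \<Rightarrow> nat \<Rightarrow> path \<Rightarrow> path" where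
  "phi_step u i P =
    (let x = u ! i; prev = u ! (i - 1); pre = take i u;
         a = asc_count pre; m = Max (set pre) in
     if x = 0 then
       (let k = last_UD P in take k P @ [U, U, D, D] @ drop (Suc (Suc k)) P)
     else if x = prev then U # P @ [D]
     else if x = a + 1 then P @ [U, D]
     else
       (let Ai = (if prev = 0 then [m..<Suc a] else [Suc m..<Suc a]);
            j = (THE j. j < length Ai \<and> Ai ! j = x);
            e = nat (elevation P);
            l = key_downs P ! j;
            k = match_up P l;
            Q = take l P @ [U, D] @ drop l P;
            R = drop e Q
        in take (k - e) R @ replicate e U @ drop (k - e) R))"

text \<open>Here j is the 0-based position, so key_downs P ! j is the paper's D_{j+1}
  with j+1 the 1-based position. The e upsteps are inserted immediately before
  the (shifted) matching upstep, i.e. into the ascent containing it.\<close>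

definition Phi :: "nat list \<Rightarrow> path" where
  "Phi u = foldl (\<lambda>P i. phi_step u i P) [U, D] [1..<length u]"

end

theory Submission
  imports Defs
begin


fun pc :: "('a \<Rightarrow> 'a \<Rightarrow> bool) \<Rightarrow> 'a list \<Rightarrow> nat" where
  "pc R (x # y # xs) = (if R x y then 1 else 0) + pc R (y # xs)"
| "pc R _ = 0"

fun tc :: "('a \<Rightarrow> 'a \<Rightarrow> 'a \<Rightarrow> bool) \<Rightarrow> 'a list \<Rightarrow> nat" where
  "tc R (x # y # z # xs) = (if R x y z then 1 else 0) + tc R (y # z # xs)"
| "tc R _ = 0"

lemma card_less_Suc_split:
  "card {i. i < Suc n \<and> p i} = (if p 0 then 1 else 0) + card {i. i < n \<and> p (Suc i)}"
proof -
  have e: "{i. i < Suc n \<and> p i} = (if p 0 then {0} else {}) \<union> Suc ` {i. i < n \<and> p (Suc i)}"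
    by (auto simp: less_Suc_eq_0_disj)
  have "card ((if p 0 then {0} else {}) \<union> Suc ` {i. i < n \<and> p (Suc i)}) =
        card (if p 0 then {0::nat} else {}) + card (Suc ` {i. i < n \<and> p (Suc i)})"
    by (rule card_Un_disjoint) auto
  also have "card (Suc ` {i. i < n \<and> p (Suc i)}) = card {i. i < n \<and> p (Suc i)}"
    by (rule card_image) auto
  finally show ?thesis using e by simp
qed

lemma pc_card: "card {i. Suc i < length xs \<and> R (xs!i) (xs!Suc i)} = pc R xs"
proof (induction R xs rule: pc.induct)
  case (1 R x y xs)
  have "card {i. Suc i < length (x # y # xs) \<and> R ((x # y # xs)!i) ((x # y # xs)!Suc i)}
     = card {i. i < Suc (length xs) \<and> R ((x # y # xs)!i) ((x # y # xs)!Suc i)}"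
    by simp
  also have "\<dots> = (if R x y then 1 else 0) + card {i. i < length xs \<and> R ((y # xs)!i) ((y # xs)!Suc i)}"
    by (subst card_less_Suc_split) simp
  also have "card {i. i < length xs \<and> R ((y # xs)!i) ((y # xs)!Suc i)} = pc R (y # xs)"
    using 1 by simp
  finally show ?case by simp
next
  case ("2_1" R)
  then show ?case by simp
next
  case ("2_2" R v)
  then show ?case by simp
qed

lemma tc_card: "card {i. i + 2 < length xs \<and> R (xs!i) (xs!(i+1)) (xs!(i+2))} = tc R xs"
proof (induction R xs rule: tc.induct)
  case (1 R x y z xs)
  have "card {i. i + 2 < length (x # y # z # xs) \<and> R ((x # y # z # xs)!i) ((x # y # z # xs)!(i+1)) ((x # y # z # xs)!(i+2))}
     = card {i. i < Suc (length xs) \<and> R ((x # y # z # xs)!i) ((x # y # z # xs)!Suc i) ((x # y # z # xs)!Suc (Suc i))}"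
    by (simp add: numeral_2_eq_2)
  also have "\<dots> = (if R x y z then 1 else 0) + card {i. i < length xs \<and> R ((y # z # xs)!i) ((y # z # xs)!Suc i) ((y # z # xs)!Suc (Suc i))}"
    by (subst card_less_Suc_split) simp
  also have "card {i. i < length xs \<and> R ((y # z # xs)!i) ((y # z # xs)!Suc i) ((y # z # xs)!Suc (Suc i))} = tc R (y # z # xs)"
    using 1 by (simp add: numeral_2_eq_2)
  finally show ?case by simp
qed auto

lemma asc_pc: "asc_count xs = pc (<) xs"
  unfolding asc_count_def by (rule pc_card)
lemma desc_pc: "desc_count xs = pc (>) xs"
  unfolding desc_count_def by (rule pc_card)
lemma valley_pc: "valley_count P = pc (\<lambda>a b. \<not> a \<and> b) P"
  unfolding valley_count_def by (subst pc_card[symmetric]) simp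
lemma DUU_tc: "DUU_count P = tc (\<lambda>a b c. \<not> a \<and> b \<and> c) P"
  unfolding DUU_count_def by (subst tc_card[symmetric]) simp

lemma pc_snoc: "pc R (xs @ [x]) = pc R xs + (if xs \<noteq> [] \<and> R (last xs) x then 1 else 0)"
  by (induction R xs rule: pc.induct) auto

lemma pc_Cons: "pc R (v # ys) = pc R ys + (if ys \<noteq> [] \<and> R v (hd ys) then 1 else 0)"
  by (cases ys) auto

lemma pc_append: "pc R (xs @ ys) = pc R xs + pc R ys + (if xs \<noteq> [] \<and> ys \<noteq> [] \<and> R (last xs) (hd ys) then 1 else 0)"
  by (induction xs) (auto simp: pc_Cons)



definition hf :: "path \<Rightarrow> int" where "hf P = height P (length P)"

lemma height_0[simp]: "height P 0 = 0"
  by (simp add: height_def)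

lemma height_Suc: "v < length P \<Longrightarrow> height P (Suc v) = height P v + (if P!v then 1 else -1)"
  by (simp add: height_def take_Suc_conv_app_nth)

lemma height_ge_len: "length P \<le> v \<Longrightarrow> height P v = hf P"
  by (simp add: height_def hf_def)

lemma height_append1: "v \<le> length xs \<Longrightarrow> height (xs @ ys) v = height xs v"
  by (simp add: height_def)

lemma height_append2: "height (xs @ ys) (length xs + v) = hf xs + height ys v"
  by (simp add: height_def hf_def)

lemma height_append2': "length xs \<le> v \<Longrightarrow> height (xs @ ys) v = hf xs + height ys (v - length xs)"
  using height_append2[of xs ys "v - length xs"] by simp

lemma hf_append[simp]: "hf (xs @ ys) = hf xs + hf ys"
  by (simp add: hf_def height_def)

lemma hf_Nil[simp]: "hf [] = 0" by (simp add: hf_def height_def)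
lemma hf_Cons[simp]: "hf (x # xs) = (if x then 1 else -1) + hf xs"
  by (simp add: hf_def height_def)

lemma hf_rep[simp]: "hf (replicate t b) = (if b then int t else - int t)"
  by (induction t) auto

lemma count_list_rep[simp]: "count_list (replicate n x) y = (if x = y then n else 0)"
  by (induction n) auto

lemma height_rep: "height (replicate t b) v = (if b then int (min v t) else - int (min v t))"
  by (simp add: height_def)

lemma height_Cons_Suc: "height (x # xs) (Suc v) = (if x then 1 else -1) + height xs v"
  by (simp add: height_def)

definition nn :: "path \<Rightarrow> bool" where "nn P \<longleftrightarrow> (\<forall>v \<le> length P. 0 \<le> height P v)"

lemma dyck_iff: "dyck_path P \<longleftrightarrow> hf P = 0 \<and> nn P"
proof -
  have a: "count_list P U = count_list P D \<longleftrightarrow> hf P = 0"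
    by (simp add: hf_def height_def)
  have b: "(\<forall>k \<le> length P. count_list (take k P) D \<le> count_list (take k P) U) \<longleftrightarrow> nn P"
    by (simp add: nn_def height_def)
  show ?thesis unfolding dyck_path_def using a b by blast
qed

lemma nn_append: "nn xs \<Longrightarrow> nn ys \<Longrightarrow> 0 \<le> hf xs \<Longrightarrow> nn (xs @ ys)"
  unfolding nn_def
proof (intro allI impI)
  fix v assume A: "\<forall>v\<le>length xs. 0 \<le> height xs v" "\<forall>v\<le>length ys. 0 \<le> height ys v" "0 \<le> hf xs"
    and v: "v \<le> length (xs @ ys)"
  show "0 \<le> height (xs @ ys) v"
  proof (cases "v \<le> length xs")
    case True then show ?thesis using A by (simp add: height_append1)
  next
    case False then show ?thesis using A v by (simp add: height_append2')
  qed
qed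

lemma nn_U[simp]: "nn [True]"
  by (auto simp: nn_def height_def le_Suc_eq)

lemma nn_repU[simp]: "nn (replicate t True)"
  by (auto simp: nn_def height_rep)

lemma dyck_nonempty_hd: "dyck_path A \<Longrightarrow> A \<noteq> [] \<Longrightarrow> hd A"
proof -
  assume d: "dyck_path A" and ne: "A \<noteq> []"
  then obtain x xs where A: "A = x # xs" by (cases A) auto
  have "0 \<le> height A 1" using d ne by (auto simp: dyck_iff nn_def A)
  then show ?thesis using A by (auto simp: height_def split: if_splits)
qed

lemma dyck_nonempty_last: "dyck_path A \<Longrightarrow> A \<noteq> [] \<Longrightarrow> \<not> last A"
proof -
  assume d: "dyck_path A" and ne: "A \<noteq> []"
  then obtain xs x where A: "A = xs @ [x]" by (cases A rule: rev_cases) auto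
  have "0 \<le> height A (length xs)" using d by (auto simp: dyck_iff nn_def A)
  moreover have "height A (length xs) = hf xs" using A by (simp add: height_append1 hf_def)
  moreover have "hf A = 0" using d by (simp add: dyck_iff)
  ultimately show ?thesis using A by (auto split: if_splits)
qed

lemma dyck_Nil[simp]: "dyck_path []"
  by (simp add: dyck_iff nn_def)

lemma IVT_height:
  assumes "a \<le> b" "b \<le> length P" "c \<le> height P a" "height P b \<le> c"
  shows "\<exists>v. a \<le> v \<and> v \<le> b \<and> height P v = c"
  using assms
proof (induction b)
  case 0 then show ?case by auto
next
  case (Suc b)
  have hs: "height P (Suc b) = height P b + (if P!b then 1 else -1)"
    using Suc.prems by (intro height_Suc) auto
  show ?case
  proof (cases "a = Suc b")
    case True then show ?thesis using Suc.prems by (intro exI[of _ "Suc b"]) auto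
  next
    case False
    then have ab: "a \<le> b" using Suc.prems by auto
    show ?thesis
    proof (cases "height P b \<le> c")
      case True
      then show ?thesis using Suc.IH[OF ab _ Suc.prems(3)] Suc.prems by fastforce
    next
      case False
      then have "height P (Suc b) = c" using hs Suc.prems by (auto split: if_splits)
      then show ?thesis using ab by (intro exI[of _ "Suc b"]) auto
    qed
  qed
qed

section \<open>The decomposition\<close>

definition C :: "path list \<Rightarrow> path" where "C As = concat (map (\<lambda>A. A @ [True]) As)"
definition mk :: "path list \<Rightarrow> path" where "mk As = C As @ replicate (length As) False"

lemma C_Nil[simp]: "C [] = []" by (simp add: C_def)
lemma C_Cons[simp]: "C (A # As) = A @ True # C As" by (simp add: C_def)
lemma C_append[simp]: "C (As @ Bs) = C As @ C Bs" by (simp add: C_def)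
lemma C_rep[simp]: "C (replicate e []) = replicate e True"
  by (induction e) auto

lemma C_dyck: "\<forall>A\<in>set As. dyck_path A \<Longrightarrow> hf (C As) = int (length As) \<and> nn (C As)"
proof (induction As)
  case Nil then show ?case by (simp add: nn_def)
next
  case (Cons A As)
  then have dA: "dyck_path A" and IH: "hf (C As) = int (length As)" "nn (C As)" by auto
  have "nn ([True] @ C As)" using IH by (intro nn_append) auto
  then have "nn (A @ [True] @ C As)" using dA by (rule_tac nn_append) (auto simp: dyck_iff)
  moreover have "hf (C (A # As)) = int (length (A # As))" using dA IH by (simp add: dyck_iff)
  ultimately show ?case by simp
qed

lemma hf_C: "\<forall>A\<in>set As. dyck_path A \<Longrightarrow> hf (C As) = int (length As)"
  using C_dyck by blast

lemma nn_C: "\<forall>A\<in>set As. dyck_path A \<Longrightarrow> nn (C As)"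
  using C_dyck by blast

lemma height_C_ge: "\<forall>A\<in>set As. dyck_path A \<Longrightarrow> v \<le> length (C As) \<Longrightarrow> 0 \<le> height (C As) v"
  using nn_C unfolding nn_def by blast

lemma mk_dyck: "\<forall>A\<in>set As. dyck_path A \<Longrightarrow> dyck_path (mk As)"
proof -
  assume d: "\<forall>A\<in>set As. dyck_path A"
  have hf: "hf (mk As) = 0" using hf_C[OF d] by (simp add: mk_def)
  have "nn (mk As)" unfolding nn_def
  proof (intro allI impI)
    fix v assume v: "v \<le> length (mk As)"
    show "0 \<le> height (mk As) v"
    proof (cases "v \<le> length (C As)")
      case True then show ?thesis using height_C_ge[OF d True] by (simp add: mk_def height_append1)
    next
      case False then show ?thesis using v hf_C[OF d]
        by (simp add: mk_def height_append2' height_rep)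
    qed
  qed
  then show ?thesis using hf by (simp add: dyck_iff)
qed

lemma height_mk_tail: "\<forall>A\<in>set As. dyck_path A \<Longrightarrow> t \<le> length As \<Longrightarrow>
   height (mk As) (length (C As) + t) = int (length As) - int t"
  using hf_C by (simp add: mk_def height_append2 height_rep)

lemma mk_nth_tail: "length (C As) \<le> v \<Longrightarrow> v < length (mk As) \<Longrightarrow> \<not> mk As ! v"
  by (simp add: mk_def nth_append)

lemma length_mk: "length (mk As) = length (C As) + length As"
  by (simp add: mk_def)



lemma takeWhile_stop: "\<not> P y \<Longrightarrow> takeWhile P (xs @ y # ys) = takeWhile P xs"
  by (induction xs) auto

lemma C_last_aux: "C As = [] \<or> last (C As)"
  by (induction As) auto

lemma C_last: "As \<noteq> [] \<Longrightarrow> C As \<noteq> [] \<and> last (C As)"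
  using C_last_aux[of As] by (cases As) auto

lemma C_hd: "\<forall>A\<in>set As. dyck_path A \<Longrightarrow> As \<noteq> [] \<Longrightarrow> C As \<noteq> [] \<and> hd (C As)"
  by (cases As) (auto simp: dyck_nonempty_hd hd_append)

abbreviation V :: "bool \<Rightarrow> bool \<Rightarrow> bool" where "V \<equiv> \<lambda>a b. \<not> a \<and> b"

definition SV :: "path list \<Rightarrow> nat" where
  "SV As = sum_list (map (\<lambda>A. pc V A + (if A = [] then 0 else 1)) As)"

lemma pc_rep_D: "pc V (replicate n False) = 0"
  by (induction n) (auto simp: pc_Cons)

lemma pc_V_C: "\<forall>A\<in>set As. dyck_path A \<Longrightarrow> pc V (C As) = SV As"
proof (induction As)
  case Nil then show ?case by (simp add: SV_def)
next
  case (Cons A As)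
  have "pc V (C (A # As)) = pc V (A @ [True] @ C As)" by simp
  also have "\<dots> = pc V A + pc V (True # C As) + (if A \<noteq> [] \<and> \<not> last A then 1 else 0)"
    by (subst pc_append) simp
  also have "pc V (True # C As) = pc V (C As)" by (simp add: pc_Cons)
  finally show ?case using Cons dyck_nonempty_last[of A] by (auto simp: SV_def)
qed

lemma valley_mk: "\<forall>A\<in>set As. dyck_path A \<Longrightarrow> valley_count (mk As) = SV As"
proof -
  assume d: "\<forall>A\<in>set As. dyck_path A"
  show ?thesis
  proof (cases "As = []")
    case True then show ?thesis by (simp add: valley_pc mk_def SV_def)
  next
    case False
    then show ?thesis using C_last[OF False] pc_V_C[OF d]
      by (simp add: valley_pc mk_def pc_append pc_rep_D)
  qed
qed

abbreviation T :: "bool \<Rightarrow> bool \<Rightarrow> bool \<Rightarrow> bool" where "T \<equiv> \<lambda>a b c. \<not> a \<and> b \<and> c"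

definition SD :: "path list \<Rightarrow> nat" where "SD As = sum_list (map (tc T) As)"
definition K :: "path list \<Rightarrow> nat" where "K As = length (filter (\<lambda>A. A \<noteq> []) (butlast As))"

lemma tc_Cons: "tc R (x # xs) = tc R xs + (if 2 \<le> length xs \<and> R x (xs!0) (xs!1) then 1 else 0)"
  apply (cases xs)
   apply simp
  subgoal for y ys by (cases ys) auto
  done

lemma tc_U: "tc T (True # R) = tc T R"
  by (simp add: tc_Cons)

lemma tc_rep_D: "tc T (replicate n False) = 0"
  by (induction n) (auto simp: tc_Cons)

lemma tc_app_U: "A \<noteq> [] \<Longrightarrow> \<not> last A \<Longrightarrow>
   tc T (A @ True # R) = tc T A + (if R \<noteq> [] \<and> hd R then 1 else 0) + tc T R"
proof (induction A)
  case Nil then show ?case by simp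
next
  case (Cons x A)
  show ?case
  proof (cases "A = []")
    case True
    then show ?thesis using Cons.prems by (cases R) (auto simp: tc_Cons)
  next
    case False
    then have IH: "tc T (A @ True # R) = tc T A + (if R \<noteq> [] \<and> hd R then 1 else 0) + tc T R"
      using Cons by auto
    have "tc T (x # A @ True # R) = tc T (A @ True # R) +
       (if 2 \<le> length (A @ True # R) \<and> T x ((A @ True # R)!0) ((A @ True # R)!1) then 1 else 0)"
      by (rule tc_Cons)
    moreover have "tc T (x # A) = tc T A + (if 2 \<le> length A \<and> T x (A!0) (A!1) then 1 else 0)"
      by (rule tc_Cons)
    moreover have "(2 \<le> length (A @ True # R) \<and> T x ((A @ True # R)!0) ((A @ True # R)!1)) =
                   (2 \<le> length A \<and> T x (A!0) (A!1))"
    proof (cases "length A = 1")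
      case True
      then obtain y where "A = [y]" by (cases A) auto
      then show ?thesis using Cons.prems by auto
    next
      case False
      moreover have "length A \<noteq> 0" using \<open>A \<noteq> []\<close> by simp
      ultimately have "2 \<le> length A" by linarith
      then show ?thesis by (auto simp: nth_append)
    qed
    ultimately show ?thesis using IH by simp
  qed
qed

lemma tc_C_rep: "\<forall>A\<in>set As. dyck_path A \<Longrightarrow> As \<noteq> [] \<Longrightarrow>
   tc T (C As @ replicate t False) = SD As + K As"
proof (induction As)
  case Nil then show ?case by simp
next
  case (Cons A As)
  have dA: "dyck_path A" using Cons.prems by auto
  show ?case
  proof (cases "As = []")
    case True
    then show ?thesis using dA tc_app_U[of A "replicate t False"] dyck_nonempty_last[OF dA]
      by (cases "A = []") (auto simp: SD_def K_def tc_rep_D tc_U hd_replicate)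
  next
    case False
    have IH: "tc T (C As @ replicate t False) = SD As + K As" using Cons False by auto
    have hd: "C As @ replicate t False \<noteq> [] \<and> hd (C As @ replicate t False)"
      using C_hd[of As] Cons.prems False by auto
    have K: "K (A # As) = (if A = [] then 0 else 1) + K As"
      using False by (simp add: K_def)
    show ?thesis
    proof (cases "A = []")
      case True then show ?thesis using IH K by (simp add: SD_def tc_U)
    next
      case F2: False
      have "tc T (C (A # As) @ replicate t False) = tc T (A @ True # (C As @ replicate t False))" by simp
      also have "\<dots> = tc T A + 1 + tc T (C As @ replicate t False)"
        using tc_app_U[OF F2 dyck_nonempty_last[OF dA F2]] hd by simp
      finally show ?thesis using IH K F2 by (simp add: SD_def)
    qed
  qed
qed

lemma DUU_mk: "\<forall>A\<in>set As. dyck_path A \<Longrightarrow> As \<noteq> [] \<Longrightarrow> DUU_count (mk As) = SD As + K As"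
  by (simp add: DUU_tc mk_def tc_C_rep)

fun fd :: "path list \<Rightarrow> nat" where
  "fd [] = 0"
| "fd (A # As) = (if A = [] then fd As else first_descent_len A)"

lemma fdl_app: "dyck_path A \<Longrightarrow> A \<noteq> [] \<Longrightarrow> first_descent_len (A @ True # R) = first_descent_len A"
proof -
  assume d: "dyck_path A" and ne: "A \<noteq> []"
  have "False \<in> set A" using ne dyck_nonempty_last[OF d ne] by (metis last_in_set)
  then have "dropWhile (\<lambda>s. s = True) (A @ True # R) = dropWhile (\<lambda>s. s = True) A @ True # R"
    by (rule dropWhile_append1) simp
  then show ?thesis unfolding first_descent_len_def by (simp add: takeWhile_stop)
qed

lemma fdl_C: "\<forall>A\<in>set As. dyck_path A \<Longrightarrow>
  first_descent_len (C As @ replicate t False) = (if \<forall>A\<in>set As. A = [] then t else fd As)"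
proof (induction As)
  case Nil
  show ?case by (cases t) (auto simp: first_descent_len_def)
next
  case (Cons A As)
  show ?case
  proof (cases "A = []")
    case True
    then show ?thesis using Cons by (simp add: first_descent_len_def)
  next
    case False
    then show ?thesis using Cons fdl_app[of A] by simp
  qed
qed

lemma fdl_mk: "\<forall>A\<in>set As. dyck_path A \<Longrightarrow>
  first_descent_len (mk As) = (if \<forall>A\<in>set As. A = [] then length As else fd As)"
  unfolding mk_def by (rule fdl_C)


definition te :: "path list \<Rightarrow> nat" where "te As = length (takeWhile (\<lambda>A. A = []) (rev As))"

lemma tw_C: "\<forall>A\<in>set As. dyck_path A \<Longrightarrow>
  length (takeWhile (\<lambda>s. s = True) (rev (C As))) = (if \<forall>A\<in>set As. A = [] then length As else Suc (te As))"
proof (induction As rule: rev_induct)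
  case Nil then show ?case by simp
next
  case (snoc A As)
  have dA: "dyck_path A" using snoc.prems by auto
  show ?case
  proof (cases "A = []")
    case True then show ?thesis using snoc by (simp add: te_def)
  next
    case False
    obtain B x where A: "A = B @ [x]" using False by (cases A rule: rev_cases) auto
    have "\<not> x" using dyck_nonempty_last[OF dA False] A by simp
    then show ?thesis using A False by (simp add: te_def)
  qed
qed

lemma lal_mk: "\<forall>A\<in>set As. dyck_path A \<Longrightarrow> As \<noteq> [] \<Longrightarrow>
  last_ascent_len (mk As) = (if \<forall>A\<in>set As. A = [] then length As else Suc (te As))"
proof -
  assume d: "\<forall>A\<in>set As. dyck_path A" and ne: "As \<noteq> []"
  obtain Z where Z: "C As = Z @ [True]" using C_last[OF ne] by (cases "C As" rule: rev_cases) auto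
  have "dropWhile (\<lambda>s. s = False) (rev (mk As)) = rev (C As)"
    by (simp add: mk_def Z dropWhile_append)
  then show ?thesis unfolding last_ascent_len_def using tw_C[OF d] by simp
qed


definition fz :: "path list \<Rightarrow> nat" where "fz As = length (takeWhile (\<lambda>A. A = []) As)"

lemma split_fz: "\<exists>A\<in>set As. A \<noteq> [] \<Longrightarrow>
   \<exists>B Bs. As = replicate (fz As) [] @ B # Bs \<and> B \<noteq> []"
proof -
  assume ex: "\<exists>A\<in>set As. A \<noteq> []"
  have tw: "takeWhile (\<lambda>A. A = []) As = replicate (fz As) []"
    unfolding fz_def by (rule replicate_length_same[symmetric]) (auto dest: set_takeWhileD)
  have "dropWhile (\<lambda>A. A = []) As \<noteq> []" using ex by (auto simp: dropWhile_eq_Nil_conv)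
  then obtain B Bs where dw: "dropWhile (\<lambda>A. A = []) As = B # Bs" by (cases "dropWhile (\<lambda>A. A = []) As") auto
  have "B \<noteq> []" using hd_dropWhile[of "\<lambda>A. A = []" As] dw by auto
  moreover have "As = replicate (fz As) [] @ B # Bs" using takeWhile_dropWhile_id[of "\<lambda>A. A = []" As] tw dw by simp
  ultimately show ?thesis by blast
qed

lemma elevation_mk:
  assumes d: "\<forall>A\<in>set As. dyck_path A" and ex: "\<exists>A\<in>set As. A \<noteq> []"
  shows "elevation (mk As) = int (fz As)"
proof -
  define e where "e = fz As"
  obtain B Bs where As: "As = replicate e [] @ B # Bs" and B: "B \<noteq> []"
    using split_fz[OF ex] e_def by blast
  have dB: "dyck_path B" and dBs: "\<forall>A\<in>set Bs. dyck_path A" using d As by auto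
  have dBBs: "\<forall>A\<in>set (B # Bs). dyck_path A" using dB dBs by auto
  define P where "P = mk As"
  have P: "P = replicate e True @ C (B # Bs) @ replicate (length As) False"
    by (simp add: P_def mk_def As)
  have lenC: "length (C As) = e + length (C (B # Bs))" by (simp add: As)
  define p where "p = e + length B"
  have "valley_vertex P p"
  proof -
    have lB: "0 < length B" using B by simp
    have pe: "p - 1 = length (replicate e True) + (length B - 1)" using lB by (simp add: p_def del: length_greater_0_conv)
    have "P ! (p - 1) = (B @ True # C Bs @ replicate (length As) False) ! (length B - 1)"
      unfolding pe P by (simp only: nth_append_length_plus append_assoc append_Cons C_Cons)
    also have "\<dots> = B ! (length B - 1)" using lB by (simp add: nth_append)
    finally have "P ! (p - 1) = last B" using B by (simp add: last_conv_nth)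
    moreover have "P ! p = True" by (simp add: P p_def nth_append)
    moreover have "0 < p" "p < length P" using B by (auto simp: p_def P)
    ultimately show ?thesis using dyck_nonempty_last[OF dB B] by (simp add: valley_vertex_def)
  qed
  moreover have "height P p = int e"
  proof -
    have "height P p = height (replicate e True @ B @ True # C Bs @ replicate (length As) False) (e + length B)"
      by (simp add: P p_def)
    also have "\<dots> = hf (replicate e True) + height (B @ True # C Bs @ replicate (length As) False) (length B)"
      using height_append2[of "replicate e True" "B @ True # C Bs @ replicate (length As) False" "length B"] by simp
    also have "\<dots> = int e + hf B" by (simp add: height_append1 hf_def height_rep)
    finally show ?thesis using dB by (simp add: dyck_iff)
  qed
  moreover have "\<forall>v. valley_vertex P v \<longrightarrow> int e \<le> height P v"
  proof (intro allI impI)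
    fix v assume vv: "valley_vertex P v"
    then have v0: "0 < v" "v < length P" "\<not> P ! (v - 1)" "P ! v" by (auto simp: valley_vertex_def)
    have vC: "v < length (C As)"
    proof (rule ccontr)
      assume "\<not> v < length (C As)"
      then have "\<not> mk As ! v" using v0 by (intro mk_nth_tail) (auto simp: P_def)
      then show False using v0 by (simp add: P_def)
    qed
    have ve: "e \<le> v - 1"
    proof (rule ccontr)
      assume "\<not> e \<le> v - 1"
      then have "P ! (v - 1) = True" by (simp add: P nth_append)
      then show False using v0 by simp
    qed
    have "height P v = height (C As) v" using vC by (simp add: P_def mk_def height_append1)
    also have "\<dots> = int e + height (C (B # Bs)) (v - e)"
      using ve by (simp add: As height_append2')
    finally show "int e \<le> height P v"
      using height_C_ge[OF dBBs, of "v - e"] vC lenC by simp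
  qed
  moreover have "finite {v. valley_vertex P v}"
    by (rule finite_subset[of _ "{..<length P}"]) (auto simp: valley_vertex_def)
  ultimately have "Min (height P ` {v. valley_vertex P v}) = int e"
    by (intro Min_eqI) (auto intro!: image_eqI[of _ _ p])
  then show ?thesis by (simp add: elevation_def P_def e_def)
qed



lemma last_UD_mk:
  assumes ne: "As \<noteq> []"
  shows "last_UD (mk As) = length (C As) - 1"
proof -
  obtain Z where Z: "C As = Z @ [True]" using C_last[OF ne] by (cases "C As" rule: rev_cases) auto
  have H: "length As \<ge> 1" using ne by (cases As) auto
  define P where "P = mk As"
  have P: "P = Z @ True # replicate (length As) False" by (simp add: P_def mk_def Z)
  have g: "Suc (length Z) < length P \<and> P ! (length Z) \<and> \<not> P ! Suc (length Z)"
    using H ne by (simp add: P nth_append nth_replicate)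
  have "(GREATEST k. Suc k < length P \<and> P ! k \<and> \<not> P ! Suc k) = length Z"
  proof (rule Greatest_equality)
    show "Suc (length Z) < length P \<and> P ! (length Z) \<and> \<not> P ! Suc (length Z)" by (rule g)
  next
    fix y assume y: "Suc y < length P \<and> P ! y \<and> \<not> P ! Suc y"
    show "y \<le> length Z"
    proof (rule ccontr)
      assume "\<not> y \<le> length Z"
      then have "\<not> mk As ! y" using y by (intro mk_nth_tail) (auto simp: Z P_def)
      then show False using y by (simp add: P_def)
    qed
  qed
  then show ?thesis unfolding last_UD_def P_def[symmetric] by (simp add: Z)
qed

lemma case1_mk:
  assumes ne: "As \<noteq> []"
  shows "(let k = last_UD (mk As) in take k (mk As) @ [True, True, False, False] @ drop (Suc (Suc k)) (mk As))
     = mk (As @ [[]])"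
proof -
  obtain Z where Z: "C As = Z @ [True]" using C_last[OF ne] by (cases "C As" rule: rev_cases) auto
  obtain H' where H: "length As = Suc H'" using ne by (cases As) auto
  show ?thesis using last_UD_mk[OF ne]
    by (simp add: Let_def mk_def Z H)
qed



definition kpos :: "path list \<Rightarrow> nat \<Rightarrow> nat" where
  "kpos As i = length (C (take i As)) + length (As ! i)"
definition lpos :: "path list \<Rightarrow> nat \<Rightarrow> nat" where
  "lpos As i = length (C As) + (length As - 1 - i)"

lemma mk_split:
  assumes "i < length As"
  shows "mk As = C (take i As) @ As ! i @ True # C (drop (Suc i) As) @ replicate (length As) False"
proof -
  have "As = take i As @ As ! i # drop (Suc i) As" using assms by (simp add: id_take_nth_drop)
  then have "C As = C (take i As) @ As ! i @ True # C (drop (Suc i) As)"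
    by (metis C_Cons C_append append.assoc append_Cons)
  then show ?thesis by (simp add: mk_def)
qed

lemma C_len_split:
  assumes "i < length As"
  shows "length (C As) = kpos As i + 1 + length (C (drop (Suc i) As))"
proof -
  have "As = take i As @ As ! i # drop (Suc i) As" using assms by (simp add: id_take_nth_drop)
  then have "C As = C (take i As) @ As ! i @ True # C (drop (Suc i) As)"
    by (metis C_Cons C_append append.assoc append_Cons)
  then show ?thesis by (simp add: kpos_def)
qed

context
  fixes As :: "path list" and i :: nat
  assumes d: "\<forall>A\<in>set As. dyck_path A" and i: "i < length As"
begin

private lemma dpre: "\<forall>A\<in>set (take i As). dyck_path A" using d by (auto dest: in_set_takeD)
private lemma dpost: "\<forall>A\<in>set (drop (Suc i) As). dyck_path A" using d by (auto dest: in_set_dropD)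
private lemma dA: "dyck_path (As ! i)" using d i by auto

lemma k_lt_L0: "kpos As i < length (C As)"
  using C_len_split[OF i] by simp

lemma l_lt_len: "lpos As i < length (mk As)"
  using i by (simp add: lpos_def length_mk)

lemma k_lt_l: "kpos As i < lpos As i"
  using k_lt_L0 by (simp add: lpos_def)

lemma height_k: "height (mk As) (kpos As i) = int i"
proof -
  have "height (mk As) (kpos As i) =
     height (C (take i As) @ (As ! i @ True # C (drop (Suc i) As) @ replicate (length As) False))
       (length (C (take i As)) + length (As ! i))"
    by (simp add: mk_split[OF i] kpos_def)
  also have "\<dots> = hf (C (take i As)) + height (As ! i @ True # C (drop (Suc i) As) @ replicate (length As) False) (length (As ! i))"
    by (rule height_append2)
  also have "\<dots> = int i + hf (As ! i)"
    using hf_C[OF dpre] i by (simp add: height_append1 hf_def)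
  finally show ?thesis using dA by (simp add: dyck_iff)
qed

lemma nth_k: "mk As ! kpos As i"
  by (simp add: mk_split[OF i] kpos_def nth_append)

lemma height_mid: "kpos As i < v \<Longrightarrow> v \<le> lpos As i \<Longrightarrow> int i + 1 \<le> height (mk As) v"
proof -
  assume v1: "kpos As i < v" and v2: "v \<le> lpos As i"
  show ?thesis
  proof (cases "v \<le> length (C As)")
    case True
    define w where "w = v - Suc (kpos As i)"
    have w: "w \<le> length (C (drop (Suc i) As))" using True v1 C_len_split[OF i] by (simp add: w_def)
    have vv: "v = length (C (take i As) @ As ! i @ [True]) + w" using v1 by (simp add: w_def kpos_def)
    have "height (mk As) v = height ((C (take i As) @ As ! i @ [True]) @ C (drop (Suc i) As) @ replicate (length As) False) v"
      by (simp add: mk_split[OF i])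
    also have "\<dots> = hf (C (take i As) @ As ! i @ [True]) + height (C (drop (Suc i) As) @ replicate (length As) False) w"
      unfolding vv by (rule height_append2)
    also have "\<dots> = int i + 1 + height (C (drop (Suc i) As)) w"
      using hf_C[OF dpre] i dA w by (simp add: height_append1 dyck_iff)
    finally show ?thesis using height_C_ge[OF dpost w] by simp
  next
    case False
    define t where "t = v - length (C As)"
    have t: "t \<le> length As" "t \<le> length As - 1 - i" using v2 False by (auto simp: t_def lpos_def)
    have "height (mk As) v = height (mk As) (length (C As) + t)" using False by (simp add: t_def)
    also have "\<dots> = int (length As) - int t" by (rule height_mk_tail[OF d t(1)])
    finally show ?thesis using t i by simp
  qed
qed

lemma height_after_l: "height (mk As) (Suc (lpos As i)) = int i"
proof -
  have "Suc (lpos As i) = length (C As) + (length As - i)" using i by (simp add: lpos_def)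
  then show ?thesis using height_mk_tail[OF d, of "length As - i"] i by simp
qed

lemma match_down_k: "match_down (mk As) (kpos As i) = lpos As i"
  unfolding match_down_def
proof (rule Least_equality)
  show "kpos As i < lpos As i \<and> lpos As i < length (mk As) \<and>
        height (mk As) (Suc (lpos As i)) = height (mk As) (kpos As i)"
    using k_lt_l l_lt_len height_after_l height_k by simp
next
  fix y assume y: "kpos As i < y \<and> y < length (mk As) \<and> height (mk As) (Suc y) = height (mk As) (kpos As i)"
  show "lpos As i \<le> y"
  proof (rule ccontr)
    assume "\<not> lpos As i \<le> y"
    then have "int i + 1 \<le> height (mk As) (Suc y)" using y by (intro height_mid) auto
    then show False using y height_k by simp
  qed
qed

lemma match_exists:
  assumes k: "k < length P" "P ! k" and dP: "dyck_path P"
  shows "\<exists>l. k < l \<and> l < length P \<and> height P (Suc l) = height P k"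
proof -
  have hs: "height P (Suc k) = height P k + 1" using k height_Suc[of k P] by simp
  have "0 \<le> height P k" using dP k by (simp add: dyck_iff nn_def)
  moreover have "height P (length P) = 0" using dP by (simp add: dyck_iff hf_def)
  ultimately obtain v where v: "Suc k \<le> v" "v \<le> length P" "height P v = height P k"
    using IVT_height[of "Suc k" "length P" P "height P k"] hs k by auto
  have "v \<noteq> Suc k" using v hs by auto
  then show ?thesis using v by (intro exI[of _ "v - 1"]) auto
qed

lemma match_down_inv:
  assumes k: "k < length (mk As)" "mk As ! k" and md: "match_down (mk As) k = lpos As i"
  shows "k = kpos As i"
proof -
  define P where "P = mk As"
  have dP: "dyck_path P" using mk_dyck[OF d] by (simp add: P_def)
  obtain l0 where "k < l0 \<and> l0 < length P \<and> height P (Suc l0) = height P k"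
    using match_exists[OF _ _ dP, of k] k by (auto simp: P_def)
  then have LI: "k < lpos As i \<and> lpos As i < length P \<and> height P (Suc (lpos As i)) = height P k"
    using LeastI[of "\<lambda>l. k < l \<and> l < length P \<and> height P (Suc l) = height P k" l0] md
    by (simp add: match_down_def P_def)
  have NL: "\<And>y. y < lpos As i \<Longrightarrow> \<not> (k < y \<and> y < length P \<and> height P (Suc y) = height P k)"
    using md not_less_Least[of _ "\<lambda>l. k < l \<and> l < length P \<and> height P (Suc l) = height P k"]
    by (simp add: match_down_def P_def)
  have hk: "height P k = int i" using LI height_after_l by (simp add: P_def)
  show ?thesis
  proof (rule linorder_cases[of k "kpos As i"])
    assume lt: "k < kpos As i"
    show ?thesis
    proof (cases "Suc k = kpos As i")
      case True
      have "height P (Suc k) = height P k + 1" using k height_Suc[of k P] by (simp add: P_def)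
      then show ?thesis using True hk height_k by (simp add: P_def)
    next
      case False
      then have "k < kpos As i - 1" using lt by simp
      moreover have "kpos As i - 1 < lpos As i" using k_lt_l by simp
      moreover have "kpos As i - 1 < length P" using k_lt_l l_lt_len by (simp add: P_def)
      moreover have "height P (Suc (kpos As i - 1)) = height P k"
        using lt hk height_k by (simp add: P_def)
      ultimately show ?thesis using NL by blast
    qed
  next
    assume gt: "kpos As i < k"
    have "k \<le> lpos As i" using LI by simp
    then have "int i + 1 \<le> height P k" using gt height_mid by (simp add: P_def)
    then show ?thesis using hk by simp
  qed simp
qed

end



lemma tdl_mk: "As \<noteq> [] \<Longrightarrow> terminal_descent_len (mk As) = length As"
proof -
  assume ne: "As \<noteq> []"
  obtain Z where Z: "C As = Z @ [True]" using C_last[OF ne] by (cases "C As" rule: rev_cases) auto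
  show ?thesis by (simp add: terminal_descent_len_def mk_def Z takeWhile_append)
qed

lemma nth_mk_split:
  assumes i: "i < length As"
  shows "mk As ! v = (C (take i As) @ As ! i @ True # C (drop (Suc i) As) @ replicate (length As) False) ! v"
  using mk_split[OF i] by simp

lemma nth_k_pred:
  assumes i: "i < length As" and ne: "As ! i \<noteq> []"
  shows "mk As ! (kpos As i - 1) = last (As ! i)"
proof -
  have lB: "0 < length (As ! i)" using ne by simp
  have pe: "kpos As i - 1 = length (C (take i As)) + (length (As ! i) - 1)" using lB
    by (simp add: kpos_def del: length_greater_0_conv)
  have "mk As ! (kpos As i - 1) = (As ! i @ True # C (drop (Suc i) As) @ replicate (length As) False) ! (length (As ! i) - 1)"
    unfolding nth_mk_split[OF i] pe by (simp only: nth_append_length_plus append_assoc append_Cons)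
  also have "\<dots> = As ! i ! (length (As ! i) - 1)" using lB by (simp add: nth_append)
  finally show ?thesis using ne by (simp add: last_conv_nth)
qed

lemma nth_k_pred_empty:
  assumes i: "i < length As" and e: "As ! i = []" and i0: "0 < i"
  shows "mk As ! (kpos As i - 1) = True"
proof -
  have ne: "take i As \<noteq> []" using i0 i by (cases As) auto
  obtain Z where Z: "C (take i As) = Z @ [True]" using C_last[OF ne] by (cases "C (take i As)" rule: rev_cases) auto
  have "kpos As i - 1 = length Z" by (simp add: kpos_def e Z)
  then show ?thesis unfolding nth_mk_split[OF i] by (simp add: Z e nth_append)
qed

lemma nth_k_succ:
  assumes i: "i < length As"
  shows "mk As ! Suc (kpos As i) = (C (drop (Suc i) As) @ replicate (length As) False) ! 0"
proof -
  have pe: "Suc (kpos As i) = length (C (take i As) @ As ! i @ [True]) + 0" by (simp add: kpos_def)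
  have eq: "C (take i As) @ As ! i @ True # C (drop (Suc i) As) @ replicate (length As) False
     = (C (take i As) @ As ! i @ [True]) @ (C (drop (Suc i) As) @ replicate (length As) False)" by simp
  show ?thesis unfolding nth_mk_split[OF i] pe eq
    by (rule nth_append_length_plus)
qed

definition S :: "path list \<Rightarrow> nat set" where "S As = {i. i < length As - 1 \<and> As ! i \<noteq> []}"

lemma key_down_iff:
  assumes d: "\<forall>A\<in>set As. dyck_path A" and ne: "As \<noteq> []"
  shows "key_down (mk As) l \<longleftrightarrow> (\<exists>i\<in>S As. l = lpos As i)"
proof
  assume kd: "key_down (mk As) l"
  then have l: "l < length (mk As)" "length (C As) \<le> l"
    by (auto simp: key_down_def tdl_mk[OF ne] length_mk)
  obtain k where k: "0 < k" "Suc k < length (mk As)" "mk As ! k" "match_down (mk As) k = l"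
      "\<not> mk As ! (k - 1)" "mk As ! Suc k"
    using kd by (auto simp: key_down_def)
  define i where "i = length As - 1 - (l - length (C As))"
  have i: "i < length As" using ne by (simp add: i_def)
  have li: "l = lpos As i" using l ne by (simp add: i_def lpos_def length_mk)
  have kk: "k = kpos As i" using match_down_inv[OF d i, of k] k li by simp
  have nei: "As ! i \<noteq> []"
  proof
    assume e: "As ! i = []"
    show False
    proof (cases "i = 0")
      case True then show False using kk k e by (simp add: kpos_def)
    next
      case False then show False using nth_k_pred_empty[OF i e] kk k by simp
    qed
  qed
  have ilt: "i < length As - 1"
  proof (rule ccontr)
    assume "\<not> i < length As - 1"
    then have "drop (Suc i) As = []" using i by simp
    then have "\<not> mk As ! Suc k" using nth_k_succ[OF i] kk ne by (simp add: nth_replicate)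
    then show False using k by simp
  qed
  show "\<exists>i\<in>S As. l = lpos As i" using li nei ilt by (auto simp: S_def)
next
  assume "\<exists>i\<in>S As. l = lpos As i"
  then obtain i where iS: "i \<in> S As" and li: "l = lpos As i" by blast
  have i: "i < length As" and ilt: "i < length As - 1" and nei: "As ! i \<noteq> []" using iS by (auto simp: S_def)
  have dA: "dyck_path (As ! i)" using d i by auto
  have post: "drop (Suc i) As \<noteq> []" using ilt by simp
  have dpost: "\<forall>A\<in>set (drop (Suc i) As). dyck_path A" using d by (auto dest: in_set_dropD)
  have c0: "C (drop (Suc i) As) ! 0" "C (drop (Suc i) As) \<noteq> []"
    using C_hd[OF dpost post] by (auto simp: hd_conv_nth[symmetric])
  have s1: "mk As ! Suc (kpos As i)"
    using nth_k_succ[OF i] c0 by (simp add: nth_append)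
  have s2: "\<not> mk As ! (kpos As i - 1)" using nth_k_pred[OF i nei] dyck_nonempty_last[OF dA nei] by simp
  have s3: "0 < kpos As i" using nei by (simp add: kpos_def)
  have s4: "Suc (kpos As i) < length (mk As)" using k_lt_L0[OF d i] i by (simp add: length_mk)
  have s5: "mk As ! kpos As i" by (rule nth_k[OF d i])
  have s6: "match_down (mk As) (kpos As i) = l" using match_down_k[OF d i] li by simp
  have "l < length (mk As)" using l_lt_len[OF d i] li by simp
  moreover have "length (mk As) - terminal_descent_len (mk As) \<le> l"
    using li by (simp add: tdl_mk[OF ne] length_mk lpos_def)
  ultimately show "key_down (mk As) l" unfolding key_down_def
    using s1 s2 s3 s4 s5 s6 by (intro conjI exI[of _ "kpos As i"]) auto
qed

lemma filter_upt_nth: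
  "j < length (filter p [0..<N]) \<Longrightarrow>
   p (filter p [0..<N] ! j) \<and> filter p [0..<N] ! j < N \<and> length (filter p [0..<filter p [0..<N] ! j]) = j"
proof (induction N)
  case 0 then show ?case by simp
next
  case (Suc N)
  show ?case
  proof (cases "j < length (filter p [0..<N])")
    case True
    then show ?thesis using Suc.IH by (simp add: nth_append)
  next
    case False
    then have pN: "p N" and j: "j = length (filter p [0..<N])" using Suc.prems by (auto split: if_splits)
    then show ?thesis by (simp add: nth_append)
  qed
qed

lemma length_filter_upt: "length (filter p [0..<N]) = card {x. x < N \<and> p x}"
  unfolding length_filter_conv_card by (rule arg_cong[where f=card]) auto

lemma lpos_mono: "i < length As \<Longrightarrow> i' < length As \<Longrightarrow> lpos As i' < lpos As i \<longleftrightarrow> i < i'"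
  by (auto simp: lpos_def)

lemma key_select:
  assumes d: "\<forall>A\<in>set As. dyck_path A" and ne: "As \<noteq> []" and j: "j < card (S As)"
  shows "\<exists>i\<in>S As. key_downs (mk As) ! j = lpos As i \<and> card {i'\<in>S As. i < i'} = j
           \<and> match_up (mk As) (key_downs (mk As) ! j) = kpos As i"
proof -
  define P where "P = mk As"
  have Sfin: "finite (S As)" by (simp add: S_def)
  have Slt: "\<And>i. i \<in> S As \<Longrightarrow> i < length As" by (auto simp: S_def)
  have inj: "inj_on (lpos As) (S As)" by (auto simp: inj_on_def lpos_def S_def)
  have set1: "{x. x < length P \<and> key_down P x} = lpos As ` S As"
    using key_down_iff[OF d ne] l_lt_len[OF d] Slt by (auto simp: P_def)
  have "length (key_downs P) = card (S As)"
    unfolding key_downs_def length_filter_upt set1 using card_image[OF inj] by simp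
  then have jl: "j < length (filter (key_down P) [0..<length P])" using j by (simp add: key_downs_def)
  note F = filter_upt_nth[OF jl]
  define l where "l = key_downs P ! j"
  have kdl: "key_down P l" and cnt: "card {x. x < l \<and> key_down P x} = j"
    using F by (auto simp: l_def key_downs_def length_filter_upt)
  obtain i where iS: "i \<in> S As" and li: "l = lpos As i" using kdl key_down_iff[OF d ne] by (auto simp: P_def)
  have i: "i < length As" using Slt[OF iS] .
  have set2: "{x. x < l \<and> key_down P x} = lpos As ` {i'\<in>S As. i < i'}"
  proof -
    have "{x. x < l \<and> key_down P x} = {x. x < l \<and> x \<in> lpos As ` S As}"
      using key_down_iff[OF d ne] by (auto simp: P_def)
    also have "\<dots> = lpos As ` {i'\<in>S As. i < i'}"
      using lpos_mono[OF i] Slt li by auto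
    finally show ?thesis .
  qed
  have c2: "card {i'\<in>S As. i < i'} = j"
    using cnt set2 card_image[OF inj_on_subset[OF inj, of "{i'\<in>S As. i < i'}"]] by auto
  have mu: "match_up P l = kpos As i"
    unfolding match_up_def
  proof (rule the_equality)
    show "kpos As i < length P \<and> P ! kpos As i = True \<and> match_down P (kpos As i) = l"
      using k_lt_L0[OF d i] nth_k[OF d i] match_down_k[OF d i] li by (simp add: P_def length_mk)
  next
    fix k assume "k < length P \<and> P ! k = True \<and> match_down P k = l"
    then show "k = kpos As i" using match_down_inv[OF d i, of k] li by (simp add: P_def)
  qed
  show ?thesis using iS li c2 mu by (auto simp: l_def P_def)
qed



lemma fz_nth: "x < fz As \<Longrightarrow> As ! x = []"
  unfolding fz_def by (metis (mono_tags) nth_mem set_takeWhileD takeWhile_nth)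

lemma fz_le: "i < length As \<Longrightarrow> As ! i \<noteq> [] \<Longrightarrow> fz As \<le> i"
  using fz_nth[of i As] by (cases "i < fz As") auto

lemma take_fz: "e \<le> fz As \<Longrightarrow> e \<le> i \<Longrightarrow> i \<le> length As \<Longrightarrow> take e (take i As) = replicate e []"
proof -
  assume a: "e \<le> fz As" "e \<le> i" "i \<le> length As"
  have "\<forall>y\<in>set (take e As). y = []"
    using a fz_nth by (auto simp: in_set_conv_nth)
  moreover have "length (take e As) = e" using a by simp
  ultimately have "take e As = replicate e []" by (metis replicate_length_same)
  then show ?thesis using a by (simp add: min_def)
qed

lemma case4_mk:
  assumes d: "\<forall>A\<in>set As. dyck_path A" and iS: "i \<in> S As" and e: "e = fz As"
  shows "(let Q = take (lpos As i) (mk As) @ [True, False] @ drop (lpos As i) (mk As); R = drop e Q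
          in take (kpos As i - e) R @ replicate e True @ drop (kpos As i - e) R)
       = mk (drop e (take i As) @ [As ! i] @ replicate e [] @ [mk (drop (Suc i) As)])"
proof -
  have i: "i < length As" and ilt: "i < length As - 1" and nei: "As ! i \<noteq> []" using iS by (auto simp: S_def)
  define H where "H = length As"
  define pre2 where "pre2 = drop e (take i As)"
  define A where "A = As ! i"
  define post where "post = drop (Suc i) As"
  define X where "X = C pre2"
  define Y where "Y = C post"
  have ei: "e \<le> i" using fz_le[OF i nei] e by simp
  have tk0: "take e (take i As) = replicate e []" using take_fz[of e As i] e ei i by simp
  have tk: "take i As = replicate e [] @ pre2"
    unfolding pre2_def tk0[symmetric] by (simp only: append_take_drop_id)
  have lpre2: "length pre2 = i - e" using i by (simp add: pre2_def)
  have lpost: "length post = H - 1 - i" by (simp add: post_def H_def)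
  have CAs: "C As = replicate e True @ X @ A @ True # Y"
  proof -
    have "As = take i As @ A # post" using i by (simp add: A_def post_def id_take_nth_drop)
    then have "C As = C (take i As) @ A @ True # Y" by (metis C_Cons C_append Y_def)
    then show ?thesis by (simp add: tk X_def)
  qed
  have P: "mk As = C As @ replicate H False" by (simp add: mk_def H_def)
  have lp: "lpos As i = length (C As) + (H - 1 - i)" by (simp add: lpos_def H_def)
  have kp: "kpos As i - e = length X + length A"
    by (simp add: kpos_def tk X_def A_def)
  have tk1: "take (lpos As i) (mk As) = C As @ replicate (H - 1 - i) False"
    unfolding P lp by simp
  have dr1: "drop (lpos As i) (mk As) = replicate (Suc i) False"
    unfolding P lp using i by (simp add: H_def Suc_diff_Suc)
  define R where "R = X @ A @ True # Y @ replicate (H - 1 - i) False @ [True, False] @ replicate (Suc i) False"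
  have Req: "drop e (take (lpos As i) (mk As) @ [True, False] @ drop (lpos As i) (mk As)) = R"
    unfolding tk1 dr1 CAs R_def by simp
  have tR: "take (length X + length A) R = X @ A" by (simp add: R_def)
  have dR: "drop (length X + length A) R = True # Y @ replicate (H - 1 - i) False @ [True, False] @ replicate (Suc i) False"
    by (simp add: R_def)
  have lhs: "(let Q = take (lpos As i) (mk As) @ [True, False] @ drop (lpos As i) (mk As); R = drop e Q
          in take (kpos As i - e) R @ replicate e True @ drop (kpos As i - e) R)
      = X @ A @ replicate e True @ True # Y @ replicate (H - 1 - i) False @ [True, False] @ replicate (Suc i) False"
    unfolding Let_def Req kp tR dR by simp
  have rhs: "mk (pre2 @ [A] @ replicate e [] @ [mk post])
      = X @ A @ True # replicate e True @ (Y @ replicate (H - 1 - i) False) @ True # replicate (Suc (Suc i)) False"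
  proof -
    have "length (pre2 @ [A] @ replicate e [] @ [mk post]) = Suc (Suc i)" using lpre2 ei by simp
    then show ?thesis by (simp add: mk_def X_def Y_def lpost)
  qed
  show ?thesis unfolding lhs
    using rhs by (simp add: pre2_def A_def post_def replicate_app_Cons_same)
qed



lemma asc_snoc: "asc_count (u @ [x]) = asc_count u + (if u \<noteq> [] \<and> last u < x then 1 else 0)"
  by (simp add: asc_pc pc_snoc)

lemma desc_snoc: "desc_count (u @ [x]) = desc_count u + (if u \<noteq> [] \<and> last u > x then 1 else 0)"
  by (simp add: desc_pc pc_snoc)

lemma asc_zeros: "\<forall>y\<in>set u. y = 0 \<Longrightarrow> asc_count u = 0"
proof (induction u rule: rev_induct)
  case Nil then show ?case by (simp add: asc_pc)
next
  case (snoc x u) then show ?case by (auto simp: asc_snoc)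
qed

lemma iz_snoc: "initial_zeros (u @ [x]) =
  (if \<forall>y\<in>set u. y = 0 then (if x = 0 then Suc (length u) else length u) else initial_zeros u)"
  by (auto simp: initial_zeros_def takeWhile_append)

lemma iz_zeros: "\<forall>y\<in>set u. y = 0 \<Longrightarrow> initial_zeros u = length u"
  unfolding initial_zeros_def by (subst takeWhile_eq_all_conv[THEN iffD2]) auto

lemma tz_snoc: "terminal_zeros (u @ [x]) = (if x = 0 then Suc (terminal_zeros u) else 0)"
  by (simp add: terminal_zeros_def)

lemma tz_zero_iff: "u \<noteq> [] \<Longrightarrow> terminal_zeros u = 0 \<longleftrightarrow> last u \<noteq> 0"
  by (cases u rule: rev_cases) (auto simp: terminal_zeros_def)

lemma lnz_snoc_nz: "x \<noteq> 0 \<Longrightarrow> last_nonzero_idx (u @ [x]) = length u"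
  unfolding last_nonzero_idx_def
  by (rule Greatest_equality) (auto simp: nth_append)

lemma lnz_snoc_z:
  assumes "\<exists>y\<in>set u. y \<noteq> 0"
  shows "last_nonzero_idx (u @ [0]) = last_nonzero_idx u"
proof -
  obtain i where i: "i < length u" "u ! i \<noteq> 0" using assms by (auto simp: in_set_conv_nth)
  have b: "\<And>y. y < length u \<and> u ! y \<noteq> 0 \<Longrightarrow> y < length u" by simp
  have ex: "\<exists>k. k < length u \<and> u ! k \<noteq> 0" using i by blast
  have P1: "last_nonzero_idx u < length u \<and> u ! last_nonzero_idx u \<noteq> 0"
    unfolding last_nonzero_idx_def using GreatestI_ex_nat[OF ex, of "length u"] by auto
  have P2: "\<And>y. y < length u \<and> u ! y \<noteq> 0 \<Longrightarrow> y \<le> last_nonzero_idx u"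
    unfolding last_nonzero_idx_def using Greatest_le_nat[of "\<lambda>k. k < length u \<and> u ! k \<noteq> 0" _ "length u"]
    by auto
  show ?thesis unfolding last_nonzero_idx_def[of "u @ [0]"]
  proof (rule Greatest_equality)
    show "last_nonzero_idx u < length (u @ [0]) \<and> (u @ [0]) ! last_nonzero_idx u \<noteq> 0"
      using P1 by (simp add: nth_append)
  next
    fix y assume y: "y < length (u @ [0]) \<and> (u @ [0]) ! y \<noteq> 0"
    then have "y < length u" by (auto simp: nth_append split: if_splits)
    then show "y \<le> last_nonzero_idx u" using y P2 by (simp add: nth_append)
  qed
qed

lemma lnz_lt:
  assumes "\<exists>y\<in>set u. y \<noteq> 0"
  shows "last_nonzero_idx u < length u"
proof -
  have ex: "\<exists>k. k < length u \<and> u ! k \<noteq> 0" using assms by (auto simp: in_set_conv_nth)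
  show ?thesis unfolding last_nonzero_idx_def using GreatestI_ex_nat[OF ex, of "length u"] by auto
qed

lemma run_snoc_z:
  assumes "\<exists>y\<in>set u. y \<noteq> 0"
  shows "run_before_last_nonzero (u @ [0]) = run_before_last_nonzero u"
  using lnz_snoc_z[OF assms] lnz_lt[OF assms]
  by (simp add: run_before_last_nonzero_def Let_def nth_append)

lemma run_snoc_nz: "x \<noteq> 0 \<Longrightarrow>
  run_before_last_nonzero (u @ [x]) = length (takeWhile (\<lambda>y. y = x) (rev u))"
  by (simp add: run_before_last_nonzero_def lnz_snoc_nz)

lemma run_last_nz:
  assumes "u \<noteq> []" "last u \<noteq> 0"
  shows "run_before_last_nonzero u = length (takeWhile (\<lambda>y. y = last u) (rev (butlast u)))"
proof -
  obtain v y where u: "u = v @ [y]" using assms by (cases u rule: rev_cases) auto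
  then show ?thesis using assms run_snoc_nz[of y v] by simp
qed

lemma ascent_snoc:
  assumes "ascent_seq (u @ [x])" "u \<noteq> []"
  shows "ascent_seq u \<and> x \<le> Suc (asc_count u)"
proof -
  have a: "(u @ [x]) ! 0 = 0" "\<forall>i. 1 \<le> i \<and> i < Suc (length u) \<longrightarrow> (u @ [x]) ! i \<le> 1 + asc_count (take i (u @ [x]))"
    using assms(1) by (auto simp: ascent_seq_def)
  have "ascent_seq u"
    unfolding ascent_seq_def
  proof (intro conjI allI impI)
    show "u \<noteq> []" by (rule assms(2))
    show "u ! 0 = 0" using a(1) assms(2) by (simp add: nth_append)
    fix i assume i: "1 \<le> i \<and> i < length u"
    then show "u ! i \<le> 1 + asc_count (take i u)" using a(2)[rule_format, of i] by (simp add: nth_append)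
  qed
  moreover have "x \<le> Suc (asc_count u)"
    using a(2)[rule_format, of "length u"] assms(2) by (cases u) auto
  ultimately show ?thesis by blast
qed

lemma avoids_snoc:
  assumes "avoids_021 (u @ [x])"
  shows "avoids_021 u \<and> (x \<noteq> 0 \<longrightarrow> (\<forall>y\<in>set u. y \<le> x))"
proof -
  have s: "sorted (filter (\<lambda>y. y \<noteq> 0) u @ filter (\<lambda>y. y \<noteq> 0) [x])"
    using assms by (simp add: avoids_021_def)
  have "avoids_021 u" using s by (simp add: avoids_021_def sorted_append)
  moreover have "x \<noteq> 0 \<longrightarrow> (\<forall>y\<in>set u. y \<le> x)"
    using s by (auto simp: sorted_append)
  ultimately show ?thesis by blast
qed

lemma avoids_last:
  assumes "avoids_021 u" "u \<noteq> []" "last u \<noteq> 0"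
  shows "\<forall>y\<in>set u. y \<le> last u"
proof -
  obtain v y where u: "u = v @ [y]" using assms by (cases u rule: rev_cases) auto
  show ?thesis using avoids_snoc[of v y] assms u by auto
qed

lemma Phi_snoc:
  assumes "u \<noteq> []"
  shows "Phi (u @ [x]) = phi_step (u @ [x]) (length u) (Phi u)"
proof -
  have eq: "\<And>i. i \<in> set [1..<length u] \<Longrightarrow> phi_step (u @ [x]) i = phi_step u i"
  proof -
    fix i assume "i \<in> set [1..<length u]"
    then have i: "1 \<le> i" "i < length u" by auto
    have e1: "(u @ [x]) ! i = u ! i" "(u @ [x]) ! (i - 1) = u ! (i - 1)" "take i (u @ [x]) = take i u"
      using i by (auto simp: nth_append)
    show "phi_step (u @ [x]) i = phi_step u i"
      by (intro ext) (simp only: phi_step_def e1)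
  qed
  have "Phi (u @ [x]) = phi_step (u @ [x]) (length u) (foldl (\<lambda>P i. phi_step (u @ [x]) i P) [U, D] [1..<length u])"
  proof -
    have "1 \<le> length u" using assms by (cases u) auto
    then have "[1..<length (u @ [x])] = [1..<length u] @ [length u]" by simp
    then show ?thesis by (simp add: Phi_def)
  qed
  also have "foldl (\<lambda>P i. phi_step (u @ [x]) i P) [U, D] [1..<length u] = Phi u"
    unfolding Phi_def using eq by (intro foldl_cong) auto
  finally show ?thesis .
qed

lemma phi_step_snoc:
  assumes "u \<noteq> []"
  shows "phi_step (u @ [x]) (length u) P =
    (let prev = last u; a = asc_count u; m = Max (set u) in
     if x = 0 then
       (let k = last_UD P in take k P @ [U, U, D, D] @ drop (Suc (Suc k)) P)
     else if x = prev then U # P @ [D]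
     else if x = a + 1 then P @ [U, D]
     else
       (let Ai = (if prev = 0 then [m..<Suc a] else [Suc m..<Suc a]);
            j = (THE j. j < length Ai \<and> Ai ! j = x);
            e = nat (elevation P);
            l = key_downs P ! j;
            k = match_up P l;
            Q = take l P @ [U, D] @ drop l P;
            R = drop e Q
        in take (k - e) R @ replicate e U @ drop (k - e) R))"
  using assms by (simp add: phi_step_def nth_append last_conv_nth Let_def)



lemma fd_append: "\<exists>A\<in>set As. A \<noteq> [] \<Longrightarrow> fd (As @ Bs) = fd As"
  by (induction As) auto

lemma fd_rep: "fd (replicate e [] @ Bs) = fd Bs"
  by (induction e) auto

lemma te_snoc_empty: "te (As @ [[]]) = Suc (te As)"
  by (simp add: te_def)

lemma te_snoc_ne: "B \<noteq> [] \<Longrightarrow> te (As @ [B]) = 0"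
  by (simp add: te_def)

lemma te_Cons_empty: "\<exists>A\<in>set As. A \<noteq> [] \<Longrightarrow> te ([] # As) = te As"
  by (auto simp: te_def takeWhile_append)

lemma te_zero_iff: "As \<noteq> [] \<Longrightarrow> te As = 0 \<longleftrightarrow> last As \<noteq> []"
  by (cases As rule: rev_cases) (auto simp: te_def)

lemma fz_append: "\<exists>A\<in>set As. A \<noteq> [] \<Longrightarrow> fz (As @ Bs) = fz As"
  by (auto simp: fz_def takeWhile_append)

lemma fz_Cons_empty: "fz ([] # As) = Suc (fz As)"
  by (simp add: fz_def)

lemma fz_Cons_ne: "B \<noteq> [] \<Longrightarrow> fz (B # Bs) = 0"
  by (simp add: fz_def)

lemma fz_prop: "\<exists>A\<in>set As. A \<noteq> [] \<Longrightarrow> fz As < length As \<and> As ! fz As \<noteq> []"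
proof -
  assume ex: "\<exists>A\<in>set As. A \<noteq> []"
  have tl: "\<And>xs. \<exists>x\<in>set xs. x \<noteq> [] \<Longrightarrow> length (takeWhile (\<lambda>A. A = []) xs) < length xs"
    subgoal for xs by (induction xs) auto
    done
  then have "fz As < length As" unfolding fz_def using ex by blast
  moreover have "As ! fz As \<noteq> []" using nth_length_takeWhile[of "\<lambda>A. A = []" As] calculation
    unfolding fz_def by simp
  ultimately show ?thesis by simp
qed

lemma SV_append[simp]: "SV (As @ Bs) = SV As + SV Bs" by (simp add: SV_def)
lemma SV_Cons[simp]: "SV (A # As) = pc V A + (if A = [] then 0 else 1) + SV As" by (simp add: SV_def)
lemma SV_Nil[simp]: "SV [] = 0" by (simp add: SV_def)
lemma SV_rep[simp]: "SV (replicate e []) = 0" by (induction e) auto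

lemma SD_append[simp]: "SD (As @ Bs) = SD As + SD Bs" by (simp add: SD_def)
lemma SD_Cons[simp]: "SD (A # As) = tc T A + SD As" by (simp add: SD_def)
lemma SD_Nil[simp]: "SD [] = 0" by (simp add: SD_def)
lemma SD_rep[simp]: "SD (replicate e []) = 0" by (induction e) auto

lemma K_snoc: "As \<noteq> [] \<Longrightarrow> K (As @ [B]) = K As + (if last As \<noteq> [] then 1 else 0)"
proof -
  assume ne: "As \<noteq> []"
  have "length (filter (\<lambda>A. A \<noteq> []) As) = K As + (if last As \<noteq> [] then 1 else 0)"
    unfolding K_def using ne by (cases As rule: rev_cases) auto
  then show ?thesis by (simp add: K_def)
qed

lemma K_Cons_empty: "As \<noteq> [] \<Longrightarrow> K ([] # As) = K As"
  by (simp add: K_def)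

lemma K_single: "K [B] = 0" by (simp add: K_def)

lemma count_take: "length (filter p (take k xs)) = card {i. i < k \<and> i < length xs \<and> p (xs ! i)}"
  unfolding length_filter_conv_card by (rule arg_cong[where f=card]) auto

lemma count_drop: "length (filter p (drop k xs)) = card {i. k \<le> i \<and> i < length xs \<and> p (xs ! i)}"
proof -
  have "length (filter p (drop k xs)) = card {i. i < length xs - k \<and> p (xs ! (k + i))}"
    unfolding length_filter_conv_card by (rule arg_cong[where f=card]) auto
  also have "\<dots> = card ((\<lambda>i. i + k) ` {i. i < length xs - k \<and> p (xs ! (k + i))})"
    by (rule card_image[symmetric]) (auto simp: inj_on_def)
  also have "(\<lambda>i. i + k) ` {i. i < length xs - k \<and> p (xs ! (k + i))} = {i. k \<le> i \<and> i < length xs \<and> p (xs ! i)}"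
  proof (rule set_eqI)
    fix y show "y \<in> (\<lambda>i. i + k) ` {i. i < length xs - k \<and> p (xs ! (k + i))} \<longleftrightarrow> y \<in> {i. k \<le> i \<and> i < length xs \<and> p (xs ! i)}"
      by (auto simp: image_iff add.commute intro!: exI[of _ "y - k"])
  qed
  finally show ?thesis .
qed

lemma S_butlast: "S As = {i. i < length (butlast As) \<and> butlast As ! i \<noteq> []}"
  by (auto simp: S_def nth_butlast)

lemma K_card: "K As = card (S As)"
  unfolding K_def S_butlast length_filter_conv_card by simp

lemma K_post: "i < length As - 1 \<Longrightarrow> K (drop (Suc i) As) = card {i'\<in>S As. i < i'}"
proof -
  assume i: "i < length As - 1"
  have "K (drop (Suc i) As) = length (filter (\<lambda>A. A \<noteq> []) (drop (Suc i) (butlast As)))"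
    by (simp add: K_def butlast_drop)
  also have "\<dots> = card {i'. Suc i \<le> i' \<and> i' < length (butlast As) \<and> butlast As ! i' \<noteq> []}"
    by (rule count_drop)
  also have "\<dots> = card {i'\<in>S As. i < i'}"
    by (rule arg_cong[where f=card]) (auto simp: S_butlast)
  finally show ?thesis .
qed

lemma count_pre: "i < length As - 1 \<Longrightarrow> length (filter (\<lambda>A. A \<noteq> []) (take (Suc i) As)) = card {i'\<in>S As. i' \<le> i}"
proof -
  assume i: "i < length As - 1"
  have "length (filter (\<lambda>A. A \<noteq> []) (take (Suc i) As)) = card {i'. i' < Suc i \<and> i' < length As \<and> As ! i' \<noteq> []}"
    by (rule count_take)
  also have "\<dots> = card {i'\<in>S As. i' \<le> i}"
    using i by (intro arg_cong[where f=card]) (auto simp: S_def)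
  finally show ?thesis .
qed

lemma card_S_split: "card (S As) = card {i'\<in>S As. i' \<le> i} + card {i'\<in>S As. i < i'}"
proof -
  have f: "finite (S As)" by (simp add: S_def)
  have "S As = {i'\<in>S As. i' \<le> i} \<union> {i'\<in>S As. i < i'}" by auto
  moreover have "card ({i'\<in>S As. i' \<le> i} \<union> {i'\<in>S As. i < i'}) = card {i'\<in>S As. i' \<le> i} + card {i'\<in>S As. i < i'}"
    using f by (intro card_Un_disjoint) auto
  ultimately show ?thesis by simp
qed

definition invs :: "nat list \<Rightarrow> path list \<Rightarrow> bool" where
 "invs u As \<longleftrightarrow> As \<noteq> [] \<and> (\<forall>A\<in>set As. dyck_path A) \<and> Phi u = mk As \<and>
   initial_zeros u = first_descent_len (mk As) \<and>
   asc_count u = SV As \<and> desc_count u = SD As + K As \<and> Max (set u) \<le> asc_count u \<and>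
   ((\<forall>y\<in>set u. y = 0) \<longrightarrow> As = replicate (length u) []) \<and>
   (\<not>(\<forall>y\<in>set u. y = 0) \<longrightarrow> (\<exists>A\<in>set As. A \<noteq> []) \<and> terminal_zeros u = te As \<and>
       run_before_last_nonzero u = fz As \<and>
       K As + Max (set u) = asc_count u + (if last u = 0 then 1 else 0))"

lemma invs_base: "invs [0] [[]]"
  by (simp add: invs_def Phi_def mk_def asc_pc desc_pc first_descent_len_def initial_zeros_def K_def)



context
  fixes u :: "nat list" and x :: nat and As :: "path list"
  assumes I: "invs u As" and une: "u \<noteq> []" and asc: "ascent_seq (u @ [x])" and av: "avoids_021 (u @ [x])"
begin

private lemma ne: "As \<noteq> []" using I by (simp add: invs_def)
private lemma d: "\<forall>A\<in>set As. dyck_path A" using I by (simp add: invs_def)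
private lemma Ph: "Phi u = mk As" using I by (simp add: invs_def)
private lemma iz: "initial_zeros u = first_descent_len (mk As)" using I by (simp add: invs_def)
private lemma ia: "asc_count u = SV As" using I by (simp add: invs_def)
private lemma id: "desc_count u = SD As + K As" using I by (simp add: invs_def)
private lemma im: "Max (set u) \<le> asc_count u" using I by (simp add: invs_def)
private lemma iZ: "(\<forall>y\<in>set u. y = 0) \<Longrightarrow> As = replicate (length u) []" using I by (simp add: invs_def)
private lemma iN: "\<not>(\<forall>y\<in>set u. y = 0) \<Longrightarrow> (\<exists>A\<in>set As. A \<noteq> []) \<and> terminal_zeros u = te As \<and>
       run_before_last_nonzero u = fz As \<and>
       K As + Max (set u) = asc_count u + (if last u = 0 then 1 else 0)" using I by (simp add: invs_def)
private lemma xle: "x \<le> Suc (asc_count u)" using ascent_snoc[OF asc une] by simp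
private lemma avu: "avoids_021 u" using avoids_snoc[OF av] by simp
private lemma xge: "x \<noteq> 0 \<Longrightarrow> \<forall>y\<in>set u. y \<le> x" using avoids_snoc[OF av] by simp
private lemma PhS: "Phi (u @ [x]) = phi_step (u @ [x]) (length u) (mk As)"
  using Phi_snoc[OF une] Ph by simp
private lemma Maxs: "Max (set (u @ [x])) = max x (Max (set u))"
  using une by (simp add: Max_insert)
private lemma lastin: "last u \<in> set u" using une by simp

private lemma lastAs_iff: "0 < last u \<longleftrightarrow> last As \<noteq> []"
proof (cases "\<forall>y\<in>set u. y = 0")
  case True
  then show ?thesis using iZ lastin une by (cases u) auto
next
  case False
  then have "terminal_zeros u = te As" using iN by blast
  then show ?thesis using tz_zero_iff[OF une] te_zero_iff[OF ne] by auto
qed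

lemma step_case1:
  assumes x0: "x = 0"
  shows "invs (u @ [x]) (As @ [[]])"
proof -
  have P: "Phi (u @ [x]) = mk (As @ [[]])"
    using PhS phi_step_snoc[OF une, of x "mk As"] case1_mk[OF ne] x0 by (simp add: Let_def)
  have d': "\<forall>A\<in>set (As @ [[]]). dyck_path A" using d by simp
  have izz: "initial_zeros (u @ [x]) = first_descent_len (mk (As @ [[]]))"
  proof (cases "\<forall>y\<in>set u. y = 0")
    case True
    then show ?thesis using iZ[OF True] x0 fdl_mk[OF d'] by (simp add: iz_snoc)
  next
    case False
    then have ex: "\<exists>A\<in>set As. A \<noteq> []" using iN by blast
    then show ?thesis using False iz x0 fdl_mk[OF d'] fdl_mk[OF d] fd_append[OF ex, of "[[]]"]
      by (auto simp: iz_snoc)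
  qed
  have asc': "asc_count (u @ [x]) = SV (As @ [[]])" using ia x0 by (simp add: asc_snoc)
  have desc': "desc_count (u @ [x]) = SD (As @ [[]]) + K (As @ [[]])"
    using id x0 lastAs_iff une by (simp add: desc_snoc K_snoc[OF ne])
  have max': "Max (set (u @ [x])) \<le> asc_count (u @ [x])" using Maxs im x0 by (simp add: asc_snoc)
  have Z': "(\<forall>y\<in>set (u @ [x]). y = 0) \<longrightarrow> As @ [[]] = replicate (length (u @ [x])) []"
    using iZ x0 by (simp add: replicate_append_same)
  have N': "\<not>(\<forall>y\<in>set (u @ [x]). y = 0) \<longrightarrow> (\<exists>A\<in>set (As @ [[]]). A \<noteq> []) \<and> terminal_zeros (u @ [x]) = te (As @ [[]]) \<and>
       run_before_last_nonzero (u @ [x]) = fz (As @ [[]]) \<and>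
       K (As @ [[]]) + Max (set (u @ [x])) = asc_count (u @ [x]) + (if last (u @ [x]) = 0 then 1 else 0)"
  proof
    assume nz: "\<not>(\<forall>y\<in>set (u @ [x]). y = 0)"
    then have nz0: "\<not>(\<forall>y\<in>set u. y = 0)" using x0 by simp
    note N = iN[OF nz0]
    have ex: "\<exists>y\<in>set u. y \<noteq> 0" using nz0 by blast
    show "(\<exists>A\<in>set (As @ [[]]). A \<noteq> []) \<and> terminal_zeros (u @ [x]) = te (As @ [[]]) \<and>
       run_before_last_nonzero (u @ [x]) = fz (As @ [[]]) \<and>
       K (As @ [[]]) + Max (set (u @ [x])) = asc_count (u @ [x]) + (if last (u @ [x]) = 0 then 1 else 0)"
      using N x0 run_snoc_z[OF ex] fz_append[of As "[[]]"] lastAs_iff Maxs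
      by (auto simp: tz_snoc te_snoc_empty K_snoc[OF ne] asc_snoc)
  qed
  show ?thesis unfolding invs_def using P d' izz asc' desc' max' Z' N' by simp
qed

lemma mk_Cons_empty: "mk ([] # As') = True # mk As' @ [False]"
  by (simp add: mk_def replicate_append_same)

lemma mk_single: "mk [B] = B @ [True, False]"
  by (simp add: mk_def)

lemma step_case2:
  assumes x0: "x \<noteq> 0" and xp: "x = last u"
  shows "invs (u @ [x]) ([] # As)"
proof -
  have P: "Phi (u @ [x]) = mk ([] # As)"
    using PhS phi_step_snoc[OF une, of x "mk As"] x0 xp by (simp add: Let_def mk_Cons_empty)
  have d': "\<forall>A\<in>set ([] # As). dyck_path A" using d by simp
  have nz0: "\<not>(\<forall>y\<in>set u. y = 0)"
  proof
    assume "\<forall>y\<in>set u. y = 0"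
    then have "last u = 0" using lastin by blast
    then show False using x0 xp by simp
  qed
  note N = iN[OF nz0]
  have ex: "\<exists>A\<in>set As. A \<noteq> []" using N by blast
  have izz: "initial_zeros (u @ [x]) = first_descent_len (mk ([] # As))"
    using nz0 iz fdl_mk[OF d'] fdl_mk[OF d] ex by (auto simp: iz_snoc)
  have asc': "asc_count (u @ [x]) = SV ([] # As)" using ia xp by (simp add: asc_snoc)
  have desc': "desc_count (u @ [x]) = SD ([] # As) + K ([] # As)"
    using id xp by (simp add: desc_snoc K_Cons_empty[OF ne])
  have xm: "x \<le> Max (set u)" using xp lastin by simp
  have max': "Max (set (u @ [x])) \<le> asc_count (u @ [x])" using Maxs im xm xp by (simp add: asc_snoc)
  have Z': "(\<forall>y\<in>set (u @ [x]). y = 0) \<longrightarrow> [] # As = replicate (length (u @ [x])) []"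
    using x0 by simp
  have run': "run_before_last_nonzero (u @ [x]) = Suc (run_before_last_nonzero u)"
  proof -
    have r: "rev u = x # rev (butlast u)" using une xp by (cases u rule: rev_cases) auto
    have "run_before_last_nonzero (u @ [x]) = length (takeWhile (\<lambda>y. y = x) (rev u))"
      by (rule run_snoc_nz[OF x0])
    also have "\<dots> = Suc (length (takeWhile (\<lambda>y. y = x) (rev (butlast u))))" unfolding r by simp
    also have "\<dots> = Suc (run_before_last_nonzero u)"
      using run_last_nz[OF une] x0 xp by simp
    finally show ?thesis .
  qed
  have N': "\<not>(\<forall>y\<in>set (u @ [x]). y = 0) \<longrightarrow> (\<exists>A\<in>set ([] # As). A \<noteq> []) \<and> terminal_zeros (u @ [x]) = te ([] # As) \<and>
       run_before_last_nonzero (u @ [x]) = fz ([] # As) \<and>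
       K ([] # As) + Max (set (u @ [x])) = asc_count (u @ [x]) + (if last (u @ [x]) = 0 then 1 else 0)"
    using N ex x0 xp run' te_Cons_empty[OF ex] tz_zero_iff[OF une] Maxs xm
    by (auto simp: tz_snoc fz_Cons_empty K_Cons_empty[OF ne] asc_snoc)
  show ?thesis unfolding invs_def using P d' izz asc' desc' max' Z' N' by simp
qed

lemma step_case3:
  assumes x0: "x \<noteq> 0" and xp: "x \<noteq> last u" and xa: "x = asc_count u + 1"
  shows "invs (u @ [x]) [mk As]"
proof -
  have P: "Phi (u @ [x]) = mk [mk As]"
    using PhS phi_step_snoc[OF une, of x "mk As"] x0 xp xa by (simp add: Let_def mk_single)
  have dm: "dyck_path (mk As)" by (rule mk_dyck[OF d])
  have d': "\<forall>A\<in>set [mk As]. dyck_path A" using dm by simp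
  have mne: "mk As \<noteq> []" using ne by (simp add: mk_def)
  have izz: "initial_zeros (u @ [x]) = first_descent_len (mk [mk As])"
  proof -
    have "first_descent_len (mk [mk As]) = first_descent_len (mk As)"
      using fdl_mk[OF d'] mne by simp
    then show ?thesis using iz x0 iz_zeros by (auto simp: iz_snoc)
  qed
  have "last u \<le> Max (set u)" using lastin by simp
  then have lm: "last u < x" using im xa by linarith
  have asc': "asc_count (u @ [x]) = SV [mk As]"
    using ia lm une valley_mk[OF d] mne by (simp add: asc_snoc valley_pc[symmetric])
  have desc': "desc_count (u @ [x]) = SD [mk As] + K [mk As]"
    using id lm DUU_mk[OF d ne] by (simp add: desc_snoc K_single DUU_tc[symmetric])
  have Mx: "Max (set (u @ [x])) = x" using Maxs im xa by simp
  have max': "Max (set (u @ [x])) \<le> asc_count (u @ [x])" using Mx lm une xa by (simp add: asc_snoc)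
  have Z': "(\<forall>y\<in>set (u @ [x]). y = 0) \<longrightarrow> [mk As] = replicate (length (u @ [x])) []"
    using x0 by simp
  have run': "run_before_last_nonzero (u @ [x]) = 0"
  proof -
    have r: "rev u = last u # rev (butlast u)" using une by (cases u rule: rev_cases) auto
    have "run_before_last_nonzero (u @ [x]) = length (takeWhile (\<lambda>y. y = x) (rev u))"
      by (rule run_snoc_nz[OF x0])
    then show ?thesis unfolding r using xp by simp
  qed
  have N': "\<not>(\<forall>y\<in>set (u @ [x]). y = 0) \<longrightarrow> (\<exists>A\<in>set [mk As]. A \<noteq> []) \<and> terminal_zeros (u @ [x]) = te [mk As] \<and>
       run_before_last_nonzero (u @ [x]) = fz [mk As] \<and>
       K [mk As] + Max (set (u @ [x])) = asc_count (u @ [x]) + (if last (u @ [x]) = 0 then 1 else 0)"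
    using mne x0 run' Mx lm une xa by (auto simp: tz_snoc te_def fz_Cons_ne K_single asc_snoc)
  show ?thesis unfolding invs_def using P d' izz asc' desc' max' Z' N' by simp
qed

lemma take_split_fz: "e = fz As' \<Longrightarrow> i < length As' \<Longrightarrow> As' ! i \<noteq> [] \<Longrightarrow>
   take i As' = replicate e [] @ drop e (take i As')"
proof -
  assume e: "e = fz As'" and i: "i < length As'" and ne': "As' ! i \<noteq> []"
  have ei: "e \<le> i" using fz_le[OF i ne'] e by simp
  have tk0: "take e (take i As') = replicate e []" using take_fz[of e As' i] e ei i by simp
  show ?thesis unfolding tk0[symmetric] by (simp only: append_take_drop_id)
qed

lemma step_case4:
  assumes x0: "x \<noteq> 0" and xp: "x \<noteq> last u" and xa: "x \<noteq> asc_count u + 1"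
  shows "\<exists>As'. invs (u @ [x]) As'"
proof -
  define a where "a = asc_count u"
  define m where "m = Max (set u)"
  define prev where "prev = last u"
  have xa': "x \<le> a" using xle xa by (simp add: a_def)
  have nz0: "\<not>(\<forall>y\<in>set u. y = 0)"
  proof
    assume "\<forall>y\<in>set u. y = 0"
    then have "a = 0" using asc_zeros by (simp add: a_def)
    then show False using xa' x0 by simp
  qed
  note N = iN[OF nz0]
  have ex: "\<exists>A\<in>set As. A \<noteq> []" using N by blast
  have Kinv: "K As + m = a + (if prev = 0 then 1 else 0)" using N by (simp add: a_def m_def prev_def)
  have mx: "m \<le> x" using xge[OF x0] une by (simp add: m_def)
  have pm: "prev \<noteq> 0 \<Longrightarrow> m = prev"
  proof -
    assume "prev \<noteq> 0"
    then have "\<forall>y\<in>set u. y \<le> last u" using avoids_last[OF avu une] by (simp add: prev_def)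
    then have "m \<le> prev" using une by (simp add: m_def prev_def)
    moreover have "prev \<le> m" using lastin by (simp add: m_def prev_def)
    ultimately show "m = prev" by simp
  qed
  have pmx: "prev \<noteq> 0 \<Longrightarrow> m < x" using pm mx xp by (fastforce simp: prev_def)
  define jj where "jj = (if prev = 0 then x - m else x - Suc m)"
  have Th: "(THE j. j < length (if last u = 0 then [Max (set u)..<Suc (asc_count u)] else [Suc (Max (set u))..<Suc (asc_count u)]) \<and>
              (if last u = 0 then [Max (set u)..<Suc (asc_count u)] else [Suc (Max (set u))..<Suc (asc_count u)]) ! j = x) = jj"
  proof (cases "prev = 0")
    case True
    then have "last u = 0" by (simp add: prev_def)
    then show ?thesis unfolding a_def[symmetric] m_def[symmetric]
      using True mx xa' by (intro the_equality) (auto simp: jj_def nth_upt simp del: upt_Suc)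
  next
    case False
    then have "last u \<noteq> 0" by (simp add: prev_def)
    then show ?thesis unfolding a_def[symmetric] m_def[symmetric]
      using False pmx xa' by (intro the_equality) (auto simp: jj_def nth_upt simp del: upt_Suc)
  qed
  have jlt: "jj < card (S As)"
    using Kinv mx xa' pmx by (auto simp: jj_def K_card[symmetric])
  have eq_e: "nat (elevation (mk As)) = fz As" using elevation_mk[OF d ex] by simp
  obtain i where iS: "i \<in> S As" and kd: "key_downs (mk As) ! jj = lpos As i"
    and cg: "card {i'\<in>S As. i < i'} = jj" and mu: "match_up (mk As) (key_downs (mk As) ! jj) = kpos As i"
    using key_select[OF d ne jlt] by blast
  have mu': "match_up (mk As) (lpos As i) = kpos As i" using mu kd by simp
  have i: "i < length As" and ilt: "i < length As - 1" and nei: "As ! i \<noteq> []" using iS by (auto simp: S_def)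
  define e where "e = fz As"
  define pre2 where "pre2 = drop e (take i As)"
  define A where "A = As ! i"
  define post where "post = drop (Suc i) As"
  define As' where "As' = pre2 @ [A] @ replicate e [] @ [mk post]"
  have c0: "(x = 0) = False" "(x = last u) = False" "(x = asc_count u + 1) = False" using x0 xp xa by auto
  have P: "Phi (u @ [x]) = mk As'"
  proof -
    have "phi_step (u @ [x]) (length u) (mk As) = mk As'"
      unfolding phi_step_snoc[OF une] As'_def pre2_def A_def post_def e_def case4_mk[OF d iS refl, symmetric] Let_def
      by (simp only: c0 if_False Th eq_e kd mu')
    then show ?thesis using PhS by simp
  qed
  have ei: "e \<le> i" using fz_le[OF i nei] by (simp add: e_def)
  have tk: "take i As = replicate e [] @ pre2" using take_split_fz[OF e_def i nei] by (simp add: pre2_def)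
  have Asplit: "As = replicate e [] @ pre2 @ A # post"
    using i tk by (metis A_def append.assoc id_take_nth_drop post_def)
  have tkS: "take (Suc i) As = replicate e [] @ pre2 @ [A]"
    using i tk by (simp add: take_Suc_conv_app_nth A_def)
  have post_ne: "post \<noteq> []" using ilt by (simp add: post_def)
  have dpost: "\<forall>A\<in>set post. dyck_path A" using d by (auto simp: post_def dest: in_set_dropD)
  have dpre2: "\<forall>A\<in>set pre2. dyck_path A" using d by (auto simp: pre2_def dest: in_set_dropD in_set_takeD)
  have dA: "dyck_path A" using d i by (simp add: A_def)
  have mpost: "mk post \<noteq> []" using post_ne by (simp add: mk_def)
  have d': "\<forall>B\<in>set As'. dyck_path B" using dpost dpre2 dA mk_dyck[OF dpost] by (auto simp: As'_def)
  have ne': "As' \<noteq> []" by (simp add: As'_def)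
  have ex': "\<exists>B\<in>set As'. B \<noteq> []" using nei by (auto simp: As'_def A_def)
  have exA: "\<exists>B\<in>set (pre2 @ [A]). B \<noteq> []" using nei by (auto simp: A_def)
  have fdAs: "fd As = fd (pre2 @ [A])"
  proof -
    have "fd As = fd ((pre2 @ [A]) @ post)" unfolding Asplit fd_rep by simp
    then show ?thesis using fd_append[OF exA] by simp
  qed
  have fdAs': "fd As' = fd (pre2 @ [A])"
    unfolding As'_def using fd_append[OF exA, of "replicate e [] @ [mk post]"] by simp
  have izz: "initial_zeros (u @ [x]) = first_descent_len (mk As')"
    using nz0 iz fdl_mk[OF d'] fdl_mk[OF d] ex ex' fdAs fdAs' by (auto simp: iz_snoc)
  have lm: "last u < x"
  proof (cases "prev = 0")
    case True then show ?thesis using x0 by (simp add: prev_def)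
  next
    case False then show ?thesis using pm pmx by (simp add: prev_def)
  qed
  have SVpost: "pc V (mk post) = SV post" using valley_mk[OF dpost] by (simp add: valley_pc)
  have neA: "A \<noteq> []" using nei by (simp add: A_def)
  have SVAs: "SV As = SV pre2 + pc V A + 1 + SV post" using neA by (subst Asplit) simp
  have asc': "asc_count (u @ [x]) = SV As'"
    using ia lm une SVpost SVAs mpost neA by (simp add: asc_snoc As'_def)
  have Kpost: "K post = jj" using K_post[OF ilt] cg by (simp add: post_def)
  have KAs': "K As' = card {i'\<in>S As. i' \<le> i}"
  proof -
    have "butlast As' = pre2 @ [A] @ replicate e []" by (simp add: As'_def butlast_append)
    then have "K As' = length (filter (\<lambda>B. B \<noteq> []) (take (Suc i) As))"
      unfolding K_def tkS by simp
    then show ?thesis using count_pre[OF ilt] by simp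
  qed
  have KAs: "K As = card {i'\<in>S As. i' \<le> i} + jj" using K_card card_S_split[of As i] cg by simp
  have SDpost: "tc T (mk post) = SD post + K post" using DUU_mk[OF dpost post_ne] by (simp add: DUU_tc)
  have SDAs: "SD As = SD pre2 + tc T A + SD post" unfolding Asplit by simp
  have desc': "desc_count (u @ [x]) = SD As' + K As'"
    using id lm SDpost SDAs KAs KAs' Kpost by (simp add: desc_snoc As'_def)
  have Mx: "Max (set (u @ [x])) = x" using Maxs mx by (simp add: m_def)
  have max': "Max (set (u @ [x])) \<le> asc_count (u @ [x])" using Mx lm une xa' by (simp add: asc_snoc a_def)
  have Z': "(\<forall>y\<in>set (u @ [x]). y = 0) \<longrightarrow> As' = replicate (length (u @ [x])) []"
    using x0 by simp
  have run': "run_before_last_nonzero (u @ [x]) = 0"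
  proof -
    have r: "rev u = last u # rev (butlast u)" using une by (cases u rule: rev_cases) auto
    have "run_before_last_nonzero (u @ [x]) = length (takeWhile (\<lambda>y. y = x) (rev u))"
      by (rule run_snoc_nz[OF x0])
    then show ?thesis unfolding r using xp by simp
  qed
  have fz': "fz As' = 0"
  proof (cases "pre2 = []")
    case True then show ?thesis using nei by (simp add: As'_def A_def fz_Cons_ne)
  next
    case False
    then have "e < i" using i by (simp add: pre2_def)
    then have "pre2 = As ! e # drop (Suc e) (take i As)"
      unfolding pre2_def using Cons_nth_drop_Suc[of e "take i As"] i by simp
    moreover have "As ! e \<noteq> []" using fz_prop[OF ex] by (simp add: e_def)
    ultimately show ?thesis by (simp add: As'_def fz_Cons_ne)
  qed
  have te': "te As' = 0" using mpost te_snoc_ne[of "mk post" "pre2 @ [A] @ replicate e []"] by (simp add: As'_def)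
  have Kx: "K As' + x = Suc a"
  proof (cases "prev = 0")
    case True then show ?thesis using KAs' KAs Kinv mx xa' by (simp add: jj_def)
  next
    case False then show ?thesis using KAs' KAs Kinv mx xa' pmx by (simp add: jj_def)
  qed
  have N': "\<not>(\<forall>y\<in>set (u @ [x]). y = 0) \<longrightarrow> (\<exists>B\<in>set As'. B \<noteq> []) \<and> terminal_zeros (u @ [x]) = te As' \<and>
       run_before_last_nonzero (u @ [x]) = fz As' \<and>
       K As' + Max (set (u @ [x])) = asc_count (u @ [x]) + (if last (u @ [x]) = 0 then 1 else 0)"
    using ex' x0 te' run' fz' Kx Mx lm une by (simp add: tz_snoc asc_snoc a_def)
  have "invs (u @ [x]) As'" unfolding invs_def using ne' P d' izz asc' desc' max' Z' N' by simp
  then show ?thesis by blast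
qed

end



lemma inv_exists: "ascent_seq u \<Longrightarrow> avoids_021 u \<Longrightarrow> \<exists>As. invs u As"
proof (induction u rule: rev_induct)
  case Nil then show ?case by (simp add: ascent_seq_def)
next
  case (snoc x v)
  show ?case
  proof (cases "v = []")
    case True
    then have "x = 0" using snoc.prems by (simp add: ascent_seq_def)
    then show ?thesis using True invs_base by auto
  next
    case False
    have av: "ascent_seq v" using ascent_snoc[OF snoc.prems(1) False] by simp
    have vv: "avoids_021 v" using avoids_snoc[OF snoc.prems(2)] by simp
    obtain As where I: "invs v As" using snoc.IH[OF av vv] by blast
    show ?thesis
    proof (cases "x = 0")
      case True then show ?thesis using step_case1[OF I False snoc.prems] by blast
    next
      case x0: False
      show ?thesis
      proof (cases "x = last v")
        case True then show ?thesis using step_case2[OF I False snoc.prems x0] by blast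
      next
        case xp: False
        show ?thesis
        proof (cases "x = asc_count v + 1")
          case True then show ?thesis using step_case3[OF I False snoc.prems x0 xp] by blast
        next
          case False
          then show ?thesis using step_case4[OF I \<open>v \<noteq> []\<close> snoc.prems x0 xp] by blast
        qed
      qed
    qed
  qed
qed

theorem mainTheorem2:
  fixes u :: "nat list" and n :: nat
  assumes "n \<ge> 1" and "length u = n" and "ascent_seq u" and "avoids_021 u"
  shows "initial_zeros u = first_descent_len (Phi u)
    \<and> (if (\<forall>x\<in>set u. x = 0) then n - 1 else terminal_zeros u) = last_ascent_len (Phi u) - 1
    \<and> asc_count u = valley_count (Phi u)
    \<and> desc_count u = DUU_count (Phi u)
    \<and> ((\<exists>x\<in>set u. x \<noteq> 0) \<longrightarrow> int (run_before_last_nonzero u) = elevation (Phi u))"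
proof -
  obtain As where I: "invs u As" using inv_exists[OF assms(3,4)] by blast
  have ne: "As \<noteq> []" using I by (simp add: invs_def)
  have d: "\<forall>A\<in>set As. dyck_path A" using I by (simp add: invs_def)
  have Ph: "Phi u = mk As" using I by (simp add: invs_def)
  have iz: "initial_zeros u = first_descent_len (mk As)" using I by (simp add: invs_def)
  have ia: "asc_count u = SV As" using I by (simp add: invs_def)
  have id: "desc_count u = SD As + K As" using I by (simp add: invs_def)
  have iZ: "(\<forall>y\<in>set u. y = 0) \<Longrightarrow> As = replicate (length u) []" using I by (simp add: invs_def)
  have iN0: "\<not>(\<forall>y\<in>set u. y = 0) \<Longrightarrow> (\<exists>A\<in>set As. A \<noteq> []) \<and> terminal_zeros u = te As \<and>
       run_before_last_nonzero u = fz As \<and>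
       K As + Max (set u) = asc_count u + (if last u = 0 then 1 else 0)" using I by (simp add: invs_def)
  have iN: "\<not>(\<forall>y\<in>set u. y = 0) \<longrightarrow> (\<exists>A\<in>set As. A \<noteq> []) \<and> terminal_zeros u = te As \<and>
       run_before_last_nonzero u = fz As"
  proof
    assume a: "\<not>(\<forall>y\<in>set u. y = 0)"
    show "(\<exists>A\<in>set As. A \<noteq> []) \<and> terminal_zeros u = te As \<and> run_before_last_nonzero u = fz As"
      using iN0[OF a] by (intro conjI) (elim conjE, assumption)+
  qed
  have c2: "(if (\<forall>x\<in>set u. x = 0) then n - 1 else terminal_zeros u) = last_ascent_len (Phi u) - 1"
  proof (cases "\<forall>x\<in>set u. x = 0")
    case True
    then have Ar: "As = replicate n []" using iZ assms(2) by simp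
    have all: "\<forall>A\<in>set As. A = []" unfolding Ar by simp
    have "last_ascent_len (mk As) = length As"
      unfolding lal_mk[OF d ne] if_P[OF all] by (rule refl)
    then show ?thesis unfolding if_P[OF True] Ph using Ar by simp
  next
    case False
    have c0: "(\<exists>A\<in>set As. A \<noteq> []) \<and> terminal_zeros u = te As \<and> run_before_last_nonzero u = fz As"
      using iN False by (rule mp)
    have nall: "\<not> (\<forall>A\<in>set As. A = [])" using conjunct1[OF c0] by auto
    have tz: "terminal_zeros u = te As" using c0 by (simp only: simp_thms)
    have "last_ascent_len (mk As) = Suc (te As)"
      unfolding lal_mk[OF d ne] by (simp only: nall if_False)
    then show ?thesis unfolding if_not_P[OF False] Ph tz by simp
  qed
  have c5: "(\<exists>x\<in>set u. x \<noteq> 0) \<longrightarrow> int (run_before_last_nonzero u) = elevation (Phi u)"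
  proof
    assume "\<exists>x\<in>set u. x \<noteq> 0"
    then have nz: "\<not>(\<forall>y\<in>set u. y = 0)" by auto
    have c0: "(\<exists>A\<in>set As. A \<noteq> []) \<and> terminal_zeros u = te As \<and> run_before_last_nonzero u = fz As"
      using iN nz by (rule mp)
    have c: "(\<exists>A\<in>set As. A \<noteq> []) \<and> run_before_last_nonzero u = fz As" using c0 by (simp only: simp_thms)
    have ex: "\<exists>A\<in>set As. A \<noteq> []" using c by (rule conjunct1)
    have r: "run_before_last_nonzero u = fz As" using c by (rule conjunct2)
    show "int (run_before_last_nonzero u) = elevation (Phi u)" unfolding Ph r elevation_mk[OF d ex] ..
  qed
  have c1: "initial_zeros u = first_descent_len (Phi u)" using iz Ph by simp
  have c3: "asc_count u = valley_count (Phi u)" using ia Ph valley_mk[OF d] by simp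
  have c4: "desc_count u = DUU_count (Phi u)" using id Ph DUU_mk[OF d ne] by simp
  show ?thesis using c1 c2 c3 c4 c5 by blast
qed


end
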